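(* Let $1\le k\le n-1$. Let $G_k$ be the network (of the type below) on $\{1,\dots,n\}$ whose links are exactly all pairs $\{a,b\}$ with $1\le a<b\le k$ (nodes $1,\dots,k$ form a mini fully connected network; nodes $k+1,\dots,n$ are isolated). Let $E$ be any set of $k$ unordered pairs of distinct nodes, none of which is a link of $G_k$, and let $G_k+E$ be the network with links those of $G_k$ together with $E$. Let $E^*=\{\{j,k+1\}:1\le j\le k\}$. Then $$\sum_{i=1}^n\Delta_i(G_k+E)\le\sum_{i=1}^n\Delta_i(G_k+E^* ),$$ where $G_k+E^*$ consists of a mini fully connected network on $\{1,\dots,k+1\}$ and $n-k-1$ isolated nodes.
   Context: Version-age model. A gossip network on a finite node set $\mathcal N$ is specified by source rates $\lambda_{0j}>0$ and gossip rates $\lambda_{ij}\ge 0$ ($i\neq j$; rate at which $i$ sends to $j$); $\lambda_s>0$ is the source's update rate. For nonempty $S\subseteq\mathcal N$ let $N(S)=\{i\in\mathcal N\setminus S:\ \sum_{j\in S}\lambda_{ij}>0\}$ and define $$\Delta_S=\frac{\lambda_s+\sum_{i\in N(S)}\big(\sum_{j\in S}\lambda_{ij}\big)\Delta_{S\cup\{i\}}}{\sum_{j\in S}\lambda_{0j}+\sum_{i\in N(S)}\sum_{j\in S}\lambda_{ij}}$$ (well defined by downward induction on $|S|$); $\Delta_i=\Delta_{\{i\}}$, and $\Delta_i(G)$ denotes this quantity in network $G$. Networks with uniform link rate: node set $\{1,\dots,n\}$, $\lambda_{0j}=\lambda/n$ for all $j$, and a set of links (unordered pairs of distinct nodes);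 for each link $\{a,b\}$, $\lambda_{ab}=\lambda_{ba}=\lambda/n$, and $\lambda_{ab}=0$ otherwise. A node with no links is isolated. *)

theory Defs
  imports Complex_Main
begin

text \<open>General version-age network: node set N, source rates l0 j, gossip rates l i j
  (rate at which i sends to j), source update rate ls.\<close>

definition nbr :: "'a set \<Rightarrow> ('a \<Rightarrow> 'a \<Rightarrow> real) \<Rightarrow> 'a set \<Rightarrow> 'a set" where
  "nbr N l S = {i \<in> N - S. (\<Sum>j\<in>S. l i j) > 0}"

text \<open>Downward recursion on |S|, with fuel = card N - card S.\<close>
fun dage :: "nat \<Rightarrow> 'a set \<Rightarrow> ('a \<Rightarrow> real) \<Rightarrow> ('a \<Rightarrow> 'a \<Rightarrow> real) \<Rightarrow> real \<Rightarrow> 'a set \<Rightarrow> real" where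
  "dage 0 N l0 l ls S = ls / (\<Sum>j\<in>S. l0 j)"
| "dage (Suc m) N l0 l ls S =
     (ls + (\<Sum>i\<in>nbr N l S. (\<Sum>j\<in>S. l i j) * dage m N l0 l ls (insert i S)))
     / ((\<Sum>j\<in>S. l0 j) + (\<Sum>i\<in>nbr N l S. \<Sum>j\<in>S. l i j))"

definition Delta :: "'a set \<Rightarrow> ('a \<Rightarrow> real) \<Rightarrow> ('a \<Rightarrow> 'a \<Rightarrow> real) \<Rightarrow> real \<Rightarrow> 'a set \<Rightarrow> real" where
  "Delta N l0 l ls S = dage (card N - card S) N l0 l ls S"

definition unif_rate :: "nat \<Rightarrow> real \<Rightarrow> nat set set \<Rightarrow> nat \<Rightarrow> nat \<Rightarrow> real" where
  "unif_rate n lam L i j = (if i \<noteq> j \<and> {i, j} \<in> L then lam / real n else 0)"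

definition Delta_i :: "nat \<Rightarrow> real \<Rightarrow> real \<Rightarrow> nat set set \<Rightarrow> nat \<Rightarrow> real" where
  "Delta_i n lam ls L i = Delta {1..n} (\<lambda>_. lam / real n) (unif_rate n lam L) ls {i}"

definition mini_full :: "nat \<Rightarrow> nat set set" where
  "mini_full k = {{a, b} | a b. 1 \<le> a \<and> a < b \<and> b \<le> k}"

definition star_edges :: "nat \<Rightarrow> nat set set" where
  "star_edges k = {{j, k + 1} | j. 1 \<le> j \<and> j \<le> k}"

end

theory Submission
  imports Defs
begin

fun Vq :: "nat \<Rightarrow> nat \<Rightarrow> nat \<Rightarrow> real" where
  "Vq k d 0 = 1 / (real k + real d)"
| "Vq k d (Suc m) = (1 + real (k - Suc m) * real (Suc m) * Vq k d m)
      / (real (k - Suc m) + real d + real (k - Suc m) * real (Suc m))"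

lemma Vq_nonneg: "Vq k d m \<ge> 0"
  by (induction m) (auto intro!: divide_nonneg_nonneg)

lemma Vq_Suc: "Vq k d (Suc m) = (1 + (real (k - Suc m) * real (Suc m)) * Vq k d m)
      / (real (k - Suc m) + real d + real (k - Suc m) * real (Suc m))"
  by (simp only: Vq.simps)

lemma Vq_le: "m < k \<Longrightarrow> Vq k d m \<le> 1 / (real (k - m) + real d)"
proof (induction m)
  case 0 then show ?case by simp
next
  case (Suc m)
  define s where "s = real (k - Suc m)"
  define r where "r = real (k - Suc m) * real (Suc m)"
  define V where "V = Vq k d m"
  have s1: "s \<ge> 1" using Suc.prems by (simp add: s_def)
  have IH: "V \<le> 1 / (s + 1 + real d)"
    using Suc by (simp add: of_nat_diff s_def V_def)
  have r0: "r \<ge> 0" by (simp add: r_def)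
  have "r * V \<le> r * (1 / (s + 1 + real d))" by (rule mult_left_mono[OF IH r0])
  also have "\<dots> \<le> r / (s + real d)"
    using r0 s1 by (simp add: divide_left_mono)
  finally have A: "r * V \<le> r / (s + real d)" .
  have "(1 + r * V) / (s + real d + r) \<le> 1 / (s + real d)"
  proof -
    have den: "s + real d + r > 0" using s1 r0 by simp
    have "1 + r * V \<le> 1 + r / (s + real d)" using A by simp
    also have "\<dots> = (s + real d + r) / (s + real d)" using s1 by (simp add: field_simps)
    finally have "1 + r * V \<le> (s + real d + r) / (s + real d)" .
    then show ?thesis using den s1 by (simp add: pos_divide_le_eq field_simps)
  qed
  moreover have "Vq k d (Suc m) = (1 + r * V) / (s + real d + r)"
    unfolding Vq_Suc s_def r_def V_def ..
  moreover have "real (k - Suc m) = s" by (simp add: s_def)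
  ultimately show ?case by simp
qed

lemma Vq_mono_m: "Suc m < k \<Longrightarrow> Vq k d m \<le> Vq k d (Suc m)"
proof -
  assume a: "Suc m < k"
  define s where "s = real (k - Suc m)"
  define r where "r = real (k - Suc m) * real (Suc m)"
  define V where "V = Vq k d m"
  have s1: "s \<ge> 1" using a by (simp add: s_def)
  have r0: "r \<ge> 0" by (simp add: r_def)
  have b: "V \<le> 1 / (s + real d)"
  proof -
    have "V \<le> 1 / (real (k - m) + real d)" using a unfolding V_def by (intro Vq_le) simp
    also have "\<dots> \<le> 1 / (s + real d)" using a s1 by (intro divide_left_mono) (auto simp: of_nat_diff s_def)
    finally show ?thesis .
  qed
  have "(s + real d) * V \<le> 1" using b s1 by (simp add: divide_simps mult.commute)
  moreover have "(s + real d + r) * V = (s + real d) * V + r * V" by (simp add: algebra_simps)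
  ultimately have c: "(s + real d + r) * V \<le> 1 + r * V" by linarith
  have den: "s + real d + r > 0" using s1 r0 by simp
  have "V \<le> (1 + r * V) / (s + real d + r)" using c den by (simp add: pos_le_divide_eq mult.commute)
  moreover have "Vq k d (Suc m) = (1 + r * V) / (s + real d + r)"
    unfolding Vq_Suc s_def r_def V_def ..
  ultimately show ?thesis by (simp add: V_def)
qed

lemma Vq_mono_d: "m < k \<Longrightarrow> Vq k (Suc d) m \<le> Vq k d m"
proof (induction m)
  case 0 then show ?case by (simp add: frac_le)
next
  case (Suc m)
  define s where "s = real (k - Suc m)"
  define r where "r = real (k - Suc m) * real (Suc m)"
  have s1: "s \<ge> 1" using Suc.prems by (simp add: s_def)
  have r0: "r \<ge> 0" by (simp add: r_def)
  have IH: "Vq k (Suc d) m \<le> Vq k d m" using Suc by simp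
  have n0: "0 \<le> 1 + r * Vq k d m" using r0 Vq_nonneg[of k d m] by simp
  have "(1 + r * Vq k (Suc d) m) / (s + real (Suc d) + r) \<le> (1 + r * Vq k d m) / (s + real (Suc d) + r)"
    using IH s1 r0 by (intro divide_right_mono) (auto intro: mult_left_mono)
  also have "\<dots> \<le> (1 + r * Vq k d m) / (s + real d + r)"
    using n0 s1 r0 by (intro divide_left_mono) auto
  finally show ?case unfolding Vq_Suc s_def r_def .
qed

fun hh :: "nat \<Rightarrow> real" where
  "hh 0 = 0"
| "hh (Suc n) = hh n + 1 / real (Suc n)"

lemma Vq_harm: "m < k \<Longrightarrow> Vq k 0 m * real (Suc m) = hh k - hh (k - Suc m)"
proof (induction m)
  case 0
  then obtain j where k: "k = Suc j" by (cases k) auto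
  show ?case by (simp add: k)
next
  case (Suc m)
  define s where "s = k - Suc m"
  have s1: "s \<ge> 1" using Suc.prems by (simp add: s_def)
  have IH: "Vq k 0 m * real (Suc m) = hh k - hh s" using Suc by (simp add: s_def)
  obtain j where sj: "s = Suc j" using s1 by (cases s) auto
  have ks: "k - Suc (Suc m) = j" using sj s_def by simp
  have "Vq k 0 (Suc m) = (1 + (real s * real (Suc m)) * Vq k 0 m) / (real s + 0 + real s * real (Suc m))"
    unfolding Vq_Suc s_def by simp
  also have "\<dots> = (1 + real s * (hh k - hh s)) / (real s * real (Suc (Suc m)))"
  proof -
    have "(real s * real (Suc m)) * Vq k 0 m = real s * (hh k - hh s)"
      using IH by (metis mult.assoc mult.commute)
    moreover have "real s + 0 + real s * real (Suc m) = real s * real (Suc (Suc m))"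
      by (simp add: algebra_simps)
    ultimately show ?thesis by simp
  qed
  finally have e: "Vq k 0 (Suc m) = (1 + real s * (hh k - hh s)) / (real s * real (Suc (Suc m)))" .
  define X where "X = 1 + real s * (hh k - hh s)"
  have "Vq k 0 (Suc m) * real (Suc (Suc m)) = X / real s"
  proof -
    have c: "real (Suc (Suc m)) > 0" "real s > 0" using s1 by auto
    show ?thesis unfolding e X_def[symmetric] using c by (simp add: divide_simps)
  qed
  also have "\<dots> = (1 + real s * (hh k - hh s)) / real s" by (simp add: X_def)
  finally have "Vq k 0 (Suc m) * real (Suc (Suc m)) = (1 + real s * (hh k - hh s)) / real s" .
  also have "\<dots> = hh k - hh j"
  proof -
    have hs: "hh s = hh j + 1 / real s" by (simp add: sj)
    have sp: "real s > 0" using s1 by simp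
    have "(1 + real s * (hh k - (hh j + 1 / real s))) / real s = hh k - hh j"
      using sp by (simp add: field_simps)
    then show ?thesis by (simp only: hs)
  qed
  finally show ?case by (simp add: ks)
qed

lemma Vq_a1: "k \<ge> 1 \<Longrightarrow> Vq k 0 (k - 1) * real k = hh k"
  using Vq_harm[of "k - 1" k] by simp

lemma hh_ge1: "n \<ge> 1 \<Longrightarrow> hh n \<ge> 1"
proof (induction n)
  case 0 then show ?case by simp
next
  case (Suc n)
  show ?case
  proof (cases "n = 0")
    case True then show ?thesis by simp
  next
    case False
    then have "hh n \<ge> 1" using Suc by simp
    moreover have "0 \<le> 1 / real (Suc n)" by simp
    ultimately show ?thesis by (simp only: hh.simps)
  qed
qed

locale rnet =
  fixes N :: "nat set" and adj :: "nat \<Rightarrow> nat \<Rightarrow> bool" and D :: "nat set \<Rightarrow> real"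
  assumes finN: "finite N"
  and rec: "\<And>S. S \<subseteq> N \<Longrightarrow> S \<noteq> {} \<Longrightarrow> D S =
     (1 + (\<Sum>i\<in>N - S. real (card {j\<in>S. adj i j}) * D (insert i S)))
     / (real (card S) + (\<Sum>i\<in>N - S. real (card {j\<in>S. adj i j})))"
begin

lemma finS: "S \<subseteq> N \<Longrightarrow> finite S" using finN finite_subset by blast

lemma cardS_pos: "S \<subseteq> N \<Longrightarrow> S \<noteq> {} \<Longrightarrow> real (card S) \<ge> 1"
proof -
  assume a: "S \<subseteq> N" "S \<noteq> {}"
  then have "card S > 0" using finS[OF a(1)] by (simp add: card_gt_0_iff)
  then show ?thesis by simp
qed

lemma gen_bound:
  assumes S: "S \<subseteq> N" "S \<noteq> {}"
    and beta: "\<beta> * real (card S) \<le> 1"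
    and ch: "\<And>i. i \<in> N - S \<Longrightarrow> card {j\<in>S. adj i j} > 0 \<Longrightarrow> D (insert i S) \<le> \<beta>"
    and W0: "0 \<le> W0" "W0 \<le> (\<Sum>i\<in>N - S. real (card {j\<in>S. adj i j}))"
  shows "D S \<le> (1 + W0 * \<beta>) / (real (card S) + W0)"
proof -
  define c where "c i = real (card {j\<in>S. adj i j})" for i
  define W where "W = (\<Sum>i\<in>N - S. c i)"
  have s1: "real (card S) \<ge> 1" using cardS_pos S by blast
  have W0W: "W0 \<le> W" using W0 by (simp add: W_def c_def)
  have "(\<Sum>i\<in>N - S. c i * D (insert i S)) \<le> (\<Sum>i\<in>N - S. c i * \<beta>)"
  proof (rule sum_mono)
    fix i assume i: "i \<in> N - S"
    show "c i * D (insert i S) \<le> c i * \<beta>"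
    proof (cases "card {j\<in>S. adj i j} > 0")
      case True then show ?thesis using ch[OF i True] by (simp add: c_def mult_left_mono)
    next
      case False then show ?thesis by (simp add: c_def)
    qed
  qed
  also have "\<dots> = W * \<beta>" by (simp add: W_def sum_distrib_right)
  finally have num: "(\<Sum>i\<in>N - S. c i * D (insert i S)) \<le> W * \<beta>" .
  have Wnn: "W \<ge> 0" unfolding W_def c_def by (simp add: sum_nonneg)
  have "D S = (1 + (\<Sum>i\<in>N - S. c i * D (insert i S))) / (real (card S) + W)"
    using rec[OF S] by (simp add: c_def W_def)
  also have "\<dots> \<le> (1 + W * \<beta>) / (real (card S) + W)"
    using num s1 Wnn by (intro divide_right_mono) auto
  also have "\<dots> \<le> (1 + W0 * \<beta>) / (real (card S) + W0)"
  proof -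
    have "(1 + W * \<beta>) * (real (card S) + W0) \<le> (1 + W0 * \<beta>) * (real (card S) + W)"
    proof -
      have "(W - W0) * (\<beta> * real (card S)) \<le> (W - W0) * 1"
        using W0W beta by (intro mult_left_mono) auto
      then show ?thesis by (simp add: algebra_simps)
    qed
    moreover have "0 < real (card S) + W0" "0 < real (card S) + W" using s1 W0 Wnn by auto
    ultimately show ?thesis by (simp add: divide_le_eq le_divide_eq mult.commute)
  qed
  finally show ?thesis .
qed

lemma G1: "S \<subseteq> N \<Longrightarrow> S \<noteq> {} \<Longrightarrow> D S \<le> 1 / real (card S)"
proof (induction "card (N - S)" arbitrary: S rule: less_induct)
  case less
  have s1: "real (card S) \<ge> 1" using cardS_pos less.prems by blast
  have fS: "finite S" using finS less.prems by blast
  have "D S \<le> (1 + 0 * (1 / real (card S))) / (real (card S) + 0)"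
  proof (rule gen_bound)
    show "1 / real (card S) * real (card S) \<le> 1" using s1 by simp
    fix i assume i: "i \<in> N - S"
    have lt: "card (N - insert i S) < card (N - S)"
      using i finN by (intro psubset_card_mono) auto
    have "D (insert i S) \<le> 1 / real (card (insert i S))"
      using less.hyps[OF lt] i less.prems by auto
    also have "\<dots> \<le> 1 / real (card S)" using i fS s1 by (simp add: frac_le)
    finally show "D (insert i S) \<le> 1 / real (card S)" .
  qed (use less.prems in \<open>auto simp: sum_nonneg\<close>)
  then show ?case by simp
qed

lemma node_rec:
  assumes x: "x \<in> N"
  shows "D {x} = (1 + (\<Sum>i\<in>{i\<in>N - {x}. adj i x}. D {x, i})) / (1 + real (card {i\<in>N - {x}. adj i x}))"
proof -
  have c: "real (card {j\<in>{x}. adj i j}) = (if adj i x then 1 else 0)" for i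
  proof (cases "adj i x")
    case True
    then have "{j\<in>{x}. adj i j} = {x}" by auto
    then show ?thesis using True by simp
  next
    case False
    then have "{j\<in>{x}. adj i j} = {}" by auto
    then show ?thesis using False by simp
  qed
  have fin: "finite (N - {x})" using finN by simp
  have e1: "(\<Sum>i\<in>N - {x}. real (card {j\<in>{x}. adj i j}) * D (insert i {x}))
          = (\<Sum>i\<in>{i\<in>N - {x}. adj i x}. D {x, i})"
  proof -
    have "(\<Sum>i\<in>N - {x}. real (card {j\<in>{x}. adj i j}) * D (insert i {x}))
        = (\<Sum>i\<in>N - {x}. if adj i x then D {x, i} else 0)"
      unfolding c by (rule sum.cong) (auto simp: insert_commute)
    also have "\<dots> = (\<Sum>i\<in>{i\<in>N - {x}. adj i x}. D {x, i})"
      by (rule sum.inter_filter[OF fin, symmetric])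
    finally show ?thesis .
  qed
  have e2: "(\<Sum>i\<in>N - {x}. real (card {j\<in>{x}. adj i j})) = real (card {i\<in>N - {x}. adj i x})"
  proof -
    have "(\<Sum>i\<in>N - {x}. real (card {j\<in>{x}. adj i j})) = (\<Sum>i\<in>N - {x}. if adj i x then 1 else 0)"
      unfolding c by simp
    also have "\<dots> = (\<Sum>i\<in>{i\<in>N - {x}. adj i x}. 1)"
      by (rule sum.inter_filter[OF fin, symmetric])
    finally show ?thesis by simp
  qed
  show ?thesis using rec[of "{x}"] x e1 e2 by simp
qed

end

context rnet begin

lemma Vbound:
  assumes C: "C \<subseteq> N" "card C = k" "\<forall>a\<in>C. \<forall>b\<in>C. a \<noteq> b \<longrightarrow> adj a b"
  shows "S \<subseteq> N \<Longrightarrow> S \<inter> C \<noteq> {} \<Longrightarrow> D S \<le> Vq k (card S - card (S \<inter> C)) (k - card (S \<inter> C))"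
proof (induction "card (N - S)" arbitrary: S rule: less_induct)
  case less
  have fS: "finite S" using finS less.prems by blast
  have fC: "finite C" using finS C by blast
  define s where "s = card (S \<inter> C)"
  define d where "d = card S - s"
  have s1: "s \<ge> 1" using less.prems fS by (simp add: s_def card_gt_0_iff Suc_le_eq)
  have sk: "s \<le> k" unfolding s_def using fC C(2) card_mono[of C "S \<inter> C"] by auto
  have sS: "s \<le> card S" using fS by (simp add: s_def card_mono)
  have cS: "card S = s + d" using sS by (simp add: d_def)
  show ?case
  proof (cases "s = k")
    case True
    have "D S \<le> 1 / real (card S)" using G1 less.prems by blast
    also have "\<dots> = Vq k d 0" using True cS by simp
    finally show ?thesis using True by (simp add: s_def d_def)
  next
    case False
    define m' where "m' = k - s - 1"
    have km: "k - s = Suc m'" using False sk by (simp add: m'_def)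
    define V' where "V' = Vq k d m'"
    define V where "V = Vq k d (Suc m')"
    have Sm: "Suc m' < k" using km s1 by linarith
    have V'V: "V' \<le> V" unfolding V'_def V_def using Vq_mono_m[OF Sm] .
    define c where "c i = real (card {j\<in>S. adj i j})" for i
    have cnn: "c i \<ge> 0" for i by (simp add: c_def)
    have ch1: "D (insert i S) \<le> V'" if i: "i \<in> C - S" for i
    proof -
      have lt: "card (N - insert i S) < card (N - S)"
        using i C finN by (intro psubset_card_mono) auto
      have sub: "insert i S \<subseteq> N" "insert i S \<inter> C \<noteq> {}" using i C less.prems by auto
      have e1: "insert i S \<inter> C = insert i (S \<inter> C)" using i by auto
      have e2: "card (insert i S \<inter> C) = s + 1" using i fS unfolding e1 by (simp add: s_def)
      have e3: "card (insert i S) = card S + 1" using i fS by simp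
      have "D (insert i S) \<le> Vq k (card (insert i S) - card (insert i S \<inter> C)) (k - card (insert i S \<inter> C))"
        using less.hyps[OF lt sub] .
      also have "\<dots> = V'" unfolding e2 e3 V'_def using cS km by (simp add: m'_def)
      finally show ?thesis .
    qed
    have ch2: "D (insert i S) \<le> V" if i: "i \<in> (N - S) - C" for i
    proof -
      have lt: "card (N - insert i S) < card (N - S)"
        using i finN by (intro psubset_card_mono) auto
      have sub: "insert i S \<subseteq> N" "insert i S \<inter> C \<noteq> {}" using i less.prems by auto
      have e1: "insert i S \<inter> C = S \<inter> C" using i by auto
      have e3: "card (insert i S) = card S + 1" using i fS by simp
      have "D (insert i S) \<le> Vq k (card (insert i S) - card (insert i S \<inter> C)) (k - card (insert i S \<inter> C))"
        using less.hyps[OF lt sub] .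
      also have "\<dots> = Vq k (Suc d) (Suc m')" unfolding e1 e3 using cS km by (simp add: s_def)
      also have "\<dots> \<le> V" unfolding V_def using Vq_mono_d[of "Suc m'" k d] Sm by linarith
      finally show ?thesis .
    qed
    have cge: "c i \<ge> real s" if i: "i \<in> C - S" for i
    proof -
      have "S \<inter> C \<subseteq> {j\<in>S. adj i j}" using i C(3) by auto
      then have "card (S \<inter> C) \<le> card {j\<in>S. adj i j}" using fS by (intro card_mono) auto
      then show ?thesis by (simp add: c_def s_def)
    qed
    define W1 where "W1 = (\<Sum>i\<in>C - S. c i)"
    define W2 where "W2 = (\<Sum>i\<in>(N - S) - C. c i)"
    have fNS: "finite (N - S)" using finN by simp
    have CS: "C - S \<subseteq> N - S" using C by auto
    have dd: "(N - S) - (C - S) = (N - S) - C" by auto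
    have split: "(\<Sum>i\<in>N - S. f i) = (\<Sum>i\<in>C - S. f i) + (\<Sum>i\<in>(N - S) - C. f i)" for f :: "nat \<Rightarrow> real"
      using sum.subset_diff[OF CS fNS, of f] dd by simp
    have cardCS: "card (C - S) = k - s"
    proof -
      have "C - S = C - (S \<inter> C)" by auto
      then show ?thesis using fC C by (simp add: card_Diff_subset s_def)
    qed
    have W1ge: "W1 \<ge> real s * real (Suc m')"
    proof -
      have "(\<Sum>i\<in>C - S. real s) \<le> W1" unfolding W1_def using cge by (intro sum_mono) auto
      then show ?thesis using cardCS km by (simp add: mult.commute)
    qed
    have W2nn: "W2 \<ge> 0" unfolding W2_def using cnn by (simp add: sum_nonneg)
    have num: "(\<Sum>i\<in>N - S. c i * D (insert i S)) \<le> W1 * V' + W2 * V"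
    proof -
      have "(\<Sum>i\<in>C - S. c i * D (insert i S)) \<le> (\<Sum>i\<in>C - S. c i * V')"
        using ch1 cnn by (intro sum_mono mult_left_mono) auto
      moreover have "(\<Sum>i\<in>(N - S) - C. c i * D (insert i S)) \<le> (\<Sum>i\<in>(N - S) - C. c i * V)"
        using ch2 cnn by (intro sum_mono mult_left_mono) auto
      ultimately show ?thesis unfolding split W1_def W2_def by (simp add: sum_distrib_right)
    qed
    have DS: "D S = (1 + (\<Sum>i\<in>N - S. c i * D (insert i S))) / (real s + real d + (W1 + W2))"
      using rec[OF less.prems(1)] less.prems fS cS unfolding c_def W1_def W2_def split
      by (auto simp: c_def)
    define R where "R = real s * real (Suc m')"
    have Rnn: "R \<ge> 0" by (simp add: R_def)
    have Vdef: "V = (1 + R * V') / (real s + real d + R)"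
      unfolding V_def V'_def R_def Vq_Suc using km by (simp add: m'_def)
    have den: "real s + real d + R > 0" using s1 Rnn by simp
    have E: "(real s + real d + R) * V = 1 + R * V'" using den unfolding Vdef by simp
    have W1R: "W1 \<ge> R" using W1ge by (simp add: R_def)
    have M: "(W1 - R) * V' \<le> (W1 - R) * V" using W1R V'V by (intro mult_left_mono) auto
    have key: "1 + (W1 * V' + W2 * V) \<le> (real s + real d + (W1 + W2)) * V"
      using M E by (simp add: algebra_simps)
    have den2: "real s + real d + (W1 + W2) > 0" using s1 W1R Rnn W2nn by linarith
    have "D S \<le> (1 + (W1 * V' + W2 * V)) / (real s + real d + (W1 + W2))"
      unfolding DS using num den2 by (intro divide_right_mono) auto
    also have "\<dots> \<le> V" using key den2 by (simp add: pos_divide_le_eq mult.commute)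
    finally show ?thesis unfolding V_def using km by (simp add: s_def d_def)
  qed
qed

lemma Vexact:
  assumes C: "C \<subseteq> N" "card C = k" "\<forall>a\<in>C. \<forall>b\<in>C. a \<noteq> b \<longrightarrow> adj a b"
    and iso: "\<forall>i\<in>N - C. \<forall>j\<in>C. \<not> adj i j"
  shows "S \<subseteq> C \<Longrightarrow> S \<noteq> {} \<Longrightarrow> D S = Vq k 0 (k - card S)"
proof (induction "card (C - S)" arbitrary: S rule: less_induct)
  case less
  have fC: "finite C" using finS C by blast
  have fS: "finite S" using less.prems fC finite_subset by blast
  have SN: "S \<subseteq> N" using less.prems C by blast
  define s where "s = card S"
  have s1: "s \<ge> 1" using less.prems fS by (simp add: s_def card_gt_0_iff Suc_le_eq)
  have sk: "s \<le> k" unfolding s_def using fC C(2) less.prems card_mono by blast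
  define c where "c i = real (card {j\<in>S. adj i j})" for i
  have cC: "c i = real s" if "i \<in> C - S" for i
  proof -
    have "{j\<in>S. adj i j} = S"
    proof (intro equalityI subsetI)
      fix j assume "j \<in> S"
      then show "j \<in> {j\<in>S. adj i j}" using that less.prems C(3) by (metis (mono_tags, lifting) DiffD1 DiffD2 mem_Collect_eq subsetD)
    qed auto
    then show ?thesis by (simp add: c_def s_def)
  qed
  have cN: "c i = 0" if "i \<in> (N - S) - C" for i
  proof -
    have e: "{j\<in>S. adj i j} = {}" using that less.prems iso by auto
    show ?thesis unfolding c_def e by simp
  qed
  have fNS: "finite (N - S)" using finN by simp
  have CS: "C - S \<subseteq> N - S" using C by auto
  have dd: "(N - S) - (C - S) = (N - S) - C" by auto
  have split: "(\<Sum>i\<in>N - S. f i) = (\<Sum>i\<in>C - S. f i) + (\<Sum>i\<in>(N - S) - C. f i)" for f :: "nat \<Rightarrow> real"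
    using sum.subset_diff[OF CS fNS, of f] dd by simp
  have cardCS: "card (C - S) = k - s" using fC C(2) less.prems(1) card_Diff_subset[of S C] fS by (simp add: s_def)
  have Wsum: "(\<Sum>i\<in>N - S. c i) = real s * real (k - s)"
  proof -
    have "(\<Sum>i\<in>N - S. c i) = (\<Sum>i\<in>C - S. c i) + (\<Sum>i\<in>(N - S) - C. c i)" by (rule split)
    also have "\<dots> = (\<Sum>i\<in>C - S. real s)" using cC cN by simp
    also have "\<dots> = real s * real (k - s)" using cardCS by simp
    finally show ?thesis .
  qed
  have DS: "D S = (1 + (\<Sum>i\<in>N - S. c i * D (insert i S))) / (real s + real s * real (k - s))"
    using rec[OF SN less.prems(2)] Wsum unfolding c_def s_def by simp
  show ?case
  proof (cases "s = k")
    case True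
    have CSe: "C - S = {}" using cardCS True fC by (simp add: finite_subset)
    have z: "(\<Sum>i\<in>N - S. c i * D (insert i S)) = 0" unfolding split[of "\<lambda>i. c i * D (insert i S)"] CSe using cN by simp
    show ?thesis unfolding DS z using True by (simp add: s_def)
  next
    case False
    define m' where "m' = k - s - 1"
    have km: "k - s = Suc m'" using False sk by (simp add: m'_def)
    have chv: "D (insert i S) = Vq k 0 m'" if i: "i \<in> C - S" for i
    proof -
      have lt: "card (C - insert i S) < card (C - S)"
        using i fC by (intro psubset_card_mono) auto
      have "D (insert i S) = Vq k 0 (k - card (insert i S))"
        using less.hyps[OF lt] i less.prems by auto
      also have "k - card (insert i S) = m'" using i fS km by (simp add: s_def m'_def)
      finally show ?thesis .
    qed
    have "(\<Sum>i\<in>N - S. c i * D (insert i S)) = (\<Sum>i\<in>C - S. real s * Vq k 0 m')"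
      unfolding split using cC cN chv by simp
    also have "\<dots> = real s * real (Suc m') * Vq k 0 m'" using cardCS km by simp
    finally have nm: "(\<Sum>i\<in>N - S. c i * D (insert i S)) = real s * real (Suc m') * Vq k 0 m'" .
    have "Vq k 0 (k - card S) = Vq k 0 (Suc m')" using km by (simp add: s_def)
    also have "\<dots> = (1 + real s * real (Suc m') * Vq k 0 m') / (real s + 0 + real s * real (Suc m'))"
      unfolding Vq_Suc using km by (simp add: m'_def)
    finally show ?thesis unfolding DS nm using km by simp
  qed
qed

end

lemma Delta_rec_Suc:
  assumes fN: "finite N" and S: "S \<subseteq> N" "S \<noteq> {}" and Suc: "card N - card S = Suc m"
  shows "Delta N l0 l ls S = (ls + (\<Sum>i\<in>nbr N l S. (\<Sum>j\<in>S. l i j) * Delta N l0 l ls (insert i S)))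
     / ((\<Sum>j\<in>S. l0 j) + (\<Sum>i\<in>nbr N l S. \<Sum>j\<in>S. l i j))"
proof -
  have fS: "finite S" using fN S finite_subset by blast
  have "Delta N l0 l ls S = dage (Suc m) N l0 l ls S" unfolding Delta_def by (simp only: Suc)
  also have "\<dots> = (ls + (\<Sum>i\<in>nbr N l S. (\<Sum>j\<in>S. l i j) * dage m N l0 l ls (insert i S)))
     / ((\<Sum>j\<in>S. l0 j) + (\<Sum>i\<in>nbr N l S. \<Sum>j\<in>S. l i j))" by (rule dage.simps(2))
  also have "(\<Sum>i\<in>nbr N l S. (\<Sum>j\<in>S. l i j) * dage m N l0 l ls (insert i S))
      = (\<Sum>i\<in>nbr N l S. (\<Sum>j\<in>S. l i j) * Delta N l0 l ls (insert i S))"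
  proof (rule sum.cong)
    fix i assume i: "i \<in> nbr N l S"
    then have "i \<in> N - S" unfolding nbr_def by auto
    then have "card (insert i S) = card S + 1" using fS by simp
    then have e: "card N - card (insert i S) = m" using Suc by simp
    show "(\<Sum>j\<in>S. l i j) * dage m N l0 l ls (insert i S) = (\<Sum>j\<in>S. l i j) * Delta N l0 l ls (insert i S)"
      unfolding Delta_def e ..
  qed (rule refl)
  finally show ?thesis .
qed

lemma Delta_rec:
  assumes fN: "finite N" and S: "S \<subseteq> N" "S \<noteq> {}"
  shows "Delta N l0 l ls S = (ls + (\<Sum>i\<in>nbr N l S. (\<Sum>j\<in>S. l i j) * Delta N l0 l ls (insert i S)))
     / ((\<Sum>j\<in>S. l0 j) + (\<Sum>i\<in>nbr N l S. \<Sum>j\<in>S. l i j))"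
proof (cases "card N - card S")
  case 0
  have "card N \<le> card S" using 0 by simp
  then have "card S = card N" using card_mono[OF fN S(1)] by linarith
  then have SN: "S = N" by (rule card_subset_eq[OF fN S(1)])
  have nb: "nbr N l S = {}" unfolding nbr_def SN by simp
  have "Delta N l0 l ls S = dage 0 N l0 l ls S" unfolding Delta_def by (simp only: 0)
  also have "\<dots> = ls / (\<Sum>j\<in>S. l0 j)" by (rule dage.simps(1))
  finally show ?thesis unfolding nb by simp
next
  case (Suc m)
  show ?thesis by (rule Delta_rec_Suc[OF fN S Suc])
qed

definition adjL :: "nat set set \<Rightarrow> nat \<Rightarrow> nat \<Rightarrow> bool" where
  "adjL L i j \<longleftrightarrow> i \<noteq> j \<and> {i, j} \<in> L"

definition ND :: "nat \<Rightarrow> real \<Rightarrow> real \<Rightarrow> nat set set \<Rightarrow> nat set \<Rightarrow> real" where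
  "ND n lam ls L S = Delta {1..n} (\<lambda>_. lam / real n) (unif_rate n lam L) ls S * (lam / real n) / ls"

lemma unif_sum: "finite S \<Longrightarrow> (\<Sum>j\<in>S. unif_rate n lam L i j) = lam / real n * real (card {j\<in>S. adjL L i j})"
proof -
  assume f: "finite S"
  have "(\<Sum>j\<in>S. unif_rate n lam L i j) = (\<Sum>j\<in>S. if adjL L i j then lam / real n else 0)"
    by (rule sum.cong) (auto simp: unif_rate_def adjL_def)
  also have "\<dots> = (\<Sum>j\<in>{j\<in>S. adjL L i j}. lam / real n)" by (rule sum.inter_filter[OF f, symmetric])
  finally show ?thesis by simp
qed

lemma ND_rnet:
  assumes n: "n > 0" and lam: "lam > 0" and ls: "ls > 0"
  shows "rnet {1..n} (adjL L) (ND n lam ls L)"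
proof
  show "finite {1..n}" by simp
  fix S assume S: "S \<subseteq> {1..n}" "S \<noteq> {}"
  define r where "r = lam / real n"
  have r: "r > 0" using n lam by (simp add: r_def)
  have fS: "finite S" using S finite_subset by blast
  define N where "N = {1..n}"
  define c where "c i = real (card {j\<in>S. adjL L i j})" for i
  define Dl where "Dl T = Delta N (\<lambda>_. r) (unif_rate n lam L) ls T" for T
  have cnn: "c i \<ge> 0" for i by (simp add: c_def)
  have ls_eq: "(\<Sum>j\<in>S. unif_rate n lam L i j) = r * c i" for i
    using unif_sum[OF fS] by (simp add: r_def c_def)
  have nbr_eq: "nbr N (unif_rate n lam L) S = {i\<in>N - S. c i > 0}"
    unfolding nbr_def ls_eq using r by (auto simp: zero_less_mult_iff)
  have fNS: "finite (N - S)" by (simp add: N_def)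
  have ext: "(\<Sum>i\<in>nbr N (unif_rate n lam L) S. g i) = (\<Sum>i\<in>N - S. g i)"
    if g0: "\<And>i. c i = 0 \<Longrightarrow> g i = 0" for g :: "nat \<Rightarrow> real"
  proof -
    have "(\<Sum>i\<in>nbr N (unif_rate n lam L) S. g i) = (\<Sum>i\<in>N - S. if c i > 0 then g i else 0)"
      unfolding nbr_eq by (rule sum.inter_filter[OF fNS])
    also have "\<dots> = (\<Sum>i\<in>N - S. g i)"
      by (rule sum.cong) (use g0 cnn in \<open>auto simp: less_le\<close>)
    finally show ?thesis .
  qed
  define X where "X = (\<Sum>i\<in>N - S. c i * Dl (insert i S))"
  define Y where "Y = (\<Sum>i\<in>N - S. c i)"
  have Ynn: "Y \<ge> 0" unfolding Y_def using cnn by (simp add: sum_nonneg)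
  have s1: "real (card S) \<ge> 1" using S fS by (simp add: card_gt_0_iff Suc_le_eq)
  have "Dl S = (ls + (\<Sum>i\<in>nbr N (unif_rate n lam L) S. (r * c i) * Dl (insert i S)))
     / ((\<Sum>j\<in>S. r) + (\<Sum>i\<in>nbr N (unif_rate n lam L) S. r * c i))"
  proof -
    have fN: "finite N" by (simp add: N_def)
    have "Dl S = (ls + (\<Sum>i\<in>nbr N (unif_rate n lam L) S. (\<Sum>j\<in>S. unif_rate n lam L i j) * Dl (insert i S)))
     / ((\<Sum>j\<in>S. r) + (\<Sum>i\<in>nbr N (unif_rate n lam L) S. \<Sum>j\<in>S. unif_rate n lam L i j))"
      unfolding Dl_def by (rule Delta_rec[OF fN]) (use S in \<open>auto simp: N_def\<close>)
    then show ?thesis by (simp only: ls_eq)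
  qed
  also have "\<dots> = (ls + r * X) / (r * real (card S) + r * Y)"
  proof -
    have "(\<Sum>i\<in>nbr N (unif_rate n lam L) S. (r * c i) * Dl (insert i S)) = (\<Sum>i\<in>N - S. (r * c i) * Dl (insert i S))"
      by (rule ext) simp
    also have "\<dots> = r * X" by (simp add: X_def sum_distrib_left mult.assoc)
    finally have a: "(\<Sum>i\<in>nbr N (unif_rate n lam L) S. (r * c i) * Dl (insert i S)) = r * X" .
    have "(\<Sum>i\<in>nbr N (unif_rate n lam L) S. r * c i) = (\<Sum>i\<in>N - S. r * c i)"
      by (rule ext) simp
    also have "\<dots> = r * Y" by (simp add: Y_def sum_distrib_left)
    finally have b: "(\<Sum>i\<in>nbr N (unif_rate n lam L) S. r * c i) = r * Y" .
    show ?thesis unfolding a b by (simp add: mult.commute)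
  qed
  finally have DlS: "Dl S = (ls + r * X) / (r * real (card S) + r * Y)" .
  have "ND n lam ls L S = Dl S * r / ls" by (simp add: ND_def Dl_def N_def r_def)
  also have "\<dots> = (1 + X * r / ls) / (real (card S) + Y)"
  proof -
    have p: "real (card S) + Y > 0" using s1 Ynn by linarith
    have d: "r * real (card S) + r * Y = r * (real (card S) + Y)" by (simp add: algebra_simps)
    have ne: "r \<noteq> 0" "ls \<noteq> 0" "real (card S) + Y \<noteq> 0" using r ls p by auto
    have e1: "(ls + r * X) / (r * real (card S) + r * Y) * r / ls = (ls + r * X) / (ls * (real (card S) + Y))"
      unfolding d using ne by (simp add: divide_simps)
    have e2: "(1 + X * r / ls) / (real (card S) + Y) = (ls + r * X) / (ls * (real (card S) + Y))"
      using ne by (simp add: divide_simps mult.commute)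
    show ?thesis unfolding DlS e1 e2 ..
  qed
  also have "X * r / ls = (\<Sum>i\<in>N - S. c i * ND n lam ls L (insert i S))"
    unfolding X_def by (simp add: sum_distrib_right sum_divide_distrib ND_def Dl_def N_def r_def mult.assoc)
  finally show "ND n lam ls L S = (1 + (\<Sum>i\<in>{1..n} - S. real (card {j\<in>S. adjL L i j}) * ND n lam ls L (insert i S)))
     / (real (card S) + (\<Sum>i\<in>{1..n} - S. real (card {j\<in>S. adjL L i j})))"
    by (simp add: N_def c_def Y_def)
qed

lemma Delta_i_ND:
  assumes "n > 0" "lam > 0" "ls > 0"
  shows "Delta_i n lam ls L i = ls / (lam / real n) * ND n lam ls L {i}"
  using assms unfolding Delta_i_def ND_def by (simp add: field_simps)

lemma mini_mem: "a \<in> {1..k} \<Longrightarrow> b \<in> {1..k} \<Longrightarrow> a \<noteq> b \<Longrightarrow> {a, b} \<in> mini_full k"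
proof -
  assume a: "a \<in> {1..k}" "b \<in> {1..k}" "a \<noteq> b"
  show ?thesis
  proof (cases "a < b")
    case True then show ?thesis using a unfolding mini_full_def by auto
  next
    case False then have "b < a" using a by simp
    then show ?thesis using a unfolding mini_full_def by (auto simp: insert_commute)
  qed
qed

lemma mini_in: "{i, j} \<in> mini_full k \<Longrightarrow> i \<in> {1..k} \<and> j \<in> {1..k}"
  unfolding mini_full_def by (auto simp: doubleton_eq_iff)

lemma star_in: "{i, j} \<in> star_edges k \<Longrightarrow> i \<in> {1..k+1} \<and> j \<in> {1..k+1}"
  unfolding star_edges_def by (auto simp: doubleton_eq_iff)

lemma adj_star: "adjL (mini_full k \<union> star_edges k) i j \<longleftrightarrow> i \<noteq> j \<and> i \<in> {1..k+1} \<and> j \<in> {1..k+1}"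
proof
  assume "adjL (mini_full k \<union> star_edges k) i j"
  then show "i \<noteq> j \<and> i \<in> {1..k+1} \<and> j \<in> {1..k+1}"
    unfolding adjL_def using mini_in[of i j k] star_in[of i j k] by auto
next
  assume a: "i \<noteq> j \<and> i \<in> {1..k+1} \<and> j \<in> {1..k+1}"
  show "adjL (mini_full k \<union> star_edges k) i j"
  proof (cases "i = k + 1")
    case True
    then have "{j, i} \<in> star_edges k" using a unfolding star_edges_def by auto
    then show ?thesis using a unfolding adjL_def by (auto simp: insert_commute)
  next
    case F1: False
    show ?thesis
    proof (cases "j = k + 1")
      case True
      then have "{i, j} \<in> star_edges k" using a F1 unfolding star_edges_def by auto
      then show ?thesis using a unfolding adjL_def by auto
    next
      case False
      then have "{i, j} \<in> mini_full k" using a F1 by (intro mini_mem) auto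
      then show ?thesis using a unfolding adjL_def by auto
    qed
  qed
qed

lemma rhs_value:
  assumes k1: "1 \<le> k" and kn: "k + 1 \<le> n" and lam: "lam > 0" and ls: "ls > 0"
  shows "(\<Sum>i\<in>{1..n}. ND n lam ls (mini_full k \<union> star_edges k) {i}) = hh (k + 1) + real (n - (k + 1))"
proof -
  have n: "n > 0" using kn by simp
  interpret R: rnet "{1..n}" "adjL (mini_full k \<union> star_edges k)" "ND n lam ls (mini_full k \<union> star_edges k)"
    using ND_rnet[OF n lam ls] .
  define C where "C = {1..k+1}"
  have CN: "C \<subseteq> {1..n}" using kn by (auto simp: C_def)
  have cC: "card C = k + 1" by (simp add: C_def)
  have inC: "ND n lam ls (mini_full k \<union> star_edges k) {i} = Vq (k+1) 0 k" if i: "i \<in> C" for i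
  proof -
    have "ND n lam ls (mini_full k \<union> star_edges k) {i} = Vq (k+1) 0 (k + 1 - card {i})"
      by (rule R.Vexact[OF CN cC]) (use i in \<open>auto simp: adj_star C_def\<close>)
    then show ?thesis by simp
  qed
  have outC: "ND n lam ls (mini_full k \<union> star_edges k) {i} = 1" if i: "i \<in> {1..n} - C" for i
  proof -
    have "ND n lam ls (mini_full k \<union> star_edges k) {i} = Vq 1 0 (1 - card {i})"
      by (rule R.Vexact[of "{i}"]) (use i in \<open>auto simp: adj_star C_def\<close>)
    then show ?thesis by simp
  qed
  have "(\<Sum>i\<in>{1..n}. ND n lam ls (mini_full k \<union> star_edges k) {i})
      = (\<Sum>i\<in>C. ND n lam ls (mini_full k \<union> star_edges k) {i}) + (\<Sum>i\<in>{1..n} - C. ND n lam ls (mini_full k \<union> star_edges k) {i})"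
    using sum.subset_diff[OF CN] by (simp add: add.commute)
  also have "\<dots> = (\<Sum>i\<in>C. Vq (k+1) 0 k) + (\<Sum>i\<in>{1..n} - C. 1)"
    using inC outC by simp
  also have "\<dots> = real (k+1) * Vq (k+1) 0 k + real (n - (k + 1))"
  proof -
    have "card ({1..n} - C) = n - (k + 1)" using card_Diff_subset[OF _ CN] cC by (simp add: C_def)
    then show ?thesis using cC by simp
  qed
  also have "real (k+1) * Vq (k+1) 0 k = hh (k+1)"
    using Vq_a1[of "k+1"] by (simp add: mult.commute)
  finally show ?thesis .
qed

locale lhs =
  fixes n k :: nat and lam ls :: real and E :: "nat set set"
  assumes k1: "1 \<le> k" and kn: "k + 1 \<le> n" and lam: "lam > 0" and ls: "ls > 0"
    and cardE: "card E = k"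
    and Eform: "\<forall>e\<in>E. \<exists>a b. a \<in> {1..n} \<and> b \<in> {1..n} \<and> a \<noteq> b \<and> e = {a, b}"
    and Edisj: "E \<inter> mini_full k = {}"
begin

abbreviation "LL \<equiv> mini_full k \<union> E"
abbreviation "adj \<equiv> adjL LL"
abbreviation "DD \<equiv> ND n lam ls LL"
abbreviation "NN \<equiv> {1..n}"
abbreviation "CC \<equiv> {1..k}"

lemma npos: "n > 0" using kn by simp

sublocale rnet NN adj DD using ND_rnet[OF npos lam ls] .

lemma CN: "CC \<subseteq> NN" using kn by auto

lemma adj_sym: "adj i j \<Longrightarrow> adj j i" unfolding adjL_def by (auto simp: insert_commute)

lemma adjN: "adj i j \<Longrightarrow> i \<in> NN \<and> j \<in> NN"
proof -
  assume a: "adj i j"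
  then have "{i, j} \<in> mini_full k \<or> {i, j} \<in> E" unfolding adjL_def by auto
  then show ?thesis
  proof
    assume "{i, j} \<in> mini_full k" then show ?thesis using mini_in CN by blast
  next
    assume "{i, j} \<in> E"
    then obtain a b where "a \<in> NN" "b \<in> NN" "{i, j} = {a, b}" using Eform by blast
    then show ?thesis by (auto simp: doubleton_eq_iff)
  qed
qed

lemma adjC: "i \<in> CC \<Longrightarrow> j \<in> CC \<Longrightarrow> i \<noteq> j \<Longrightarrow> adj i j"
  unfolding adjL_def using mini_mem by blast

lemma adj_outE: "adj i j \<Longrightarrow> i \<notin> CC \<Longrightarrow> {i, j} \<in> E"
  unfolding adjL_def using mini_in by blast

lemma E_adj: "{i, j} \<in> E \<Longrightarrow> i \<noteq> j \<Longrightarrow> adj i j"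
  unfolding adjL_def by auto

lemma Eedge: "e \<in> E \<Longrightarrow> \<exists>a b. e = {a, b} \<and> a \<noteq> b \<and> a \<in> NN \<and> b \<in> NN \<and> a \<notin> CC"
proof -
  assume e: "e \<in> E"
  then obtain a b where ab: "a \<in> NN" "b \<in> NN" "a \<noteq> b" "e = {a, b}" using Eform by blast
  have "\<not> (a \<in> CC \<and> b \<in> CC)"
  proof
    assume "a \<in> CC \<and> b \<in> CC"
    then have "e \<in> mini_full k" using mini_mem ab by blast
    then show False using e Edisj by blast
  qed
  then show ?thesis
  proof (cases "a \<in> CC")
    case True
    then have "b \<notin> CC" using \<open>\<not> (a \<in> CC \<and> b \<in> CC)\<close> by blast
    then show ?thesis using ab by (intro exI[of _ b] exI[of _ a]) (auto simp: insert_commute)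
  next
    case False then show ?thesis using ab by blast
  qed
qed

definition Oset :: "nat set" where "Oset = {x \<in> NN - CC. \<exists>v. adj x v}"
definition Nb :: "nat \<Rightarrow> nat set" where "Nb x = {i \<in> NN - {x}. adj i x}"

lemma finNb: "finite (Nb x)" unfolding Nb_def by simp

lemma Nb_nonempty: "x \<in> Oset \<Longrightarrow> card (Nb x) \<ge> 1"
proof -
  assume x: "x \<in> Oset"
  then obtain v where v: "adj x v" unfolding Oset_def by blast
  have "v \<in> Nb x" using v adjN[OF v] adj_sym[OF v] unfolding Nb_def adjL_def by auto
  then show ?thesis using finNb card_gt_0_iff[of "Nb x"] by (auto simp: Suc_le_eq)
qed

lemma node: "x \<in> NN \<Longrightarrow> DD {x} = (1 + (\<Sum>i\<in>Nb x. DD {x, i})) / (1 + real (card (Nb x)))"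
  unfolding Nb_def by (rule node_rec)

lemma bound_O: "x \<in> Oset \<Longrightarrow> DD {x} \<le> (1 + real (card (Nb x)) / 2) / (1 + real (card (Nb x)))"
proof -
  assume x: "x \<in> Oset"
  then have xN: "x \<in> NN" unfolding Oset_def by auto
  have "(\<Sum>i\<in>Nb x. DD {x, i}) \<le> (\<Sum>i\<in>Nb x. 1/2)"
  proof (rule sum_mono)
    fix i assume i: "i \<in> Nb x"
    then have "{x, i} \<subseteq> NN" "i \<noteq> x" using xN unfolding Nb_def by auto
    then have "DD {x, i} \<le> 1 / real (card {x, i})" using G1 by blast
    then show "DD {x, i} \<le> 1/2" using \<open>i \<noteq> x\<close> by simp
  qed
  then have "1 + (\<Sum>i\<in>Nb x. DD {x, i}) \<le> 1 + real (card (Nb x)) / 2" by simp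
  then show ?thesis unfolding node[OF xN] by (intro divide_right_mono) auto
qed

lemma bound_C: "y \<in> CC \<Longrightarrow> DD {y} \<le> Vq k 0 (k - 1)"
proof -
  assume y: "y \<in> CC"
  have "DD {y} \<le> Vq k (card {y} - card ({y} \<inter> CC)) (k - card ({y} \<inter> CC))"
    by (rule Vbound[OF CN]) (use y adjC kn in auto)
  then show ?thesis using y by simp
qed

lemma bound_R: "x \<in> NN \<Longrightarrow> DD {x} \<le> 1"
  using G1[of "{x}"] by simp

lemma E_sub_O: "E \<subseteq> (\<Union>x\<in>Oset. (\<lambda>i. {i, x}) ` Nb x)"
proof
  fix e assume e: "e \<in> E"
  then obtain a b where ab: "e = {a, b}" "a \<noteq> b" "a \<in> NN" "b \<in> NN" "a \<notin> CC" using Eedge by blast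
  have adjab: "adj a b" using e ab E_adj by blast
  have "a \<in> Oset" unfolding Oset_def using ab adjab by blast
  moreover have "b \<in> Nb a" unfolding Nb_def using ab adj_sym[OF adjab] by auto
  ultimately show "e \<in> (\<Union>x\<in>Oset. (\<lambda>i. {i, x}) ` Nb x)" using ab by (auto simp: insert_commute)
qed

lemma finO: "finite Oset" unfolding Oset_def by simp

lemma deg_sum: "real k \<le> (\<Sum>x\<in>Oset. real (card (Nb x)))"
proof -
  have "k = card E" using cardE by simp
  also have "\<dots> \<le> card (\<Union>x\<in>Oset. (\<lambda>i. {i, x}) ` Nb x)"
    using E_sub_O finO finNb by (intro card_mono) auto
  also have "\<dots> \<le> (\<Sum>x\<in>Oset. card ((\<lambda>i. {i, x}) ` Nb x))" using finO by (rule card_UN_le)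
  also have "\<dots> \<le> (\<Sum>x\<in>Oset. card (Nb x))" by (intro sum_mono card_image_le finNb)
  finally have "k \<le> (\<Sum>x\<in>Oset. card (Nb x))" .
  then show ?thesis by (simp flip: of_nat_sum)
qed

lemma O_nonempty: "Oset \<noteq> {}"
proof -
  have "E \<noteq> {}" using cardE k1 by auto
  then obtain e where "e \<in> E" by blast
  then obtain a b where ab: "e = {a, b}" "a \<noteq> b" "a \<in> NN" "b \<in> NN" "a \<notin> CC" using Eedge by blast
  then have "adj a b" using \<open>e \<in> E\<close> E_adj by blast
  then have "a \<in> Oset" unfolding Oset_def using ab by blast
  then show ?thesis by blast
qed

end

lemma merge2: "(a::real) \<ge> 1 \<Longrightarrow> b \<ge> 1 \<Longrightarrow> 1/(1+a) + 1/(1+b) \<le> 1/2 + 1/(a+b)"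
proof -
  assume a: "a \<ge> 1" "b \<ge> 1"
  have p: "1 + a > 0" "1 + b > 0" "a + b > 0" using a by auto
  have e1: "1/(1+a) + 1/(1+b) = (a+b+2) * (1/((1+a)*(1+b)))" using p by (simp add: field_simps)
  have e2: "1/2 + 1/(a+b) = (a+b+2) * (1/(2*(a+b)))" using p by (simp add: field_simps)
  have "2*(a+b) \<le> (1+a)*(1+b)"
  proof -
    have "0 \<le> (a - 1) * (b - 1)" using a by simp
    then show ?thesis by (simp add: algebra_simps)
  qed
  then have "1/((1+a)*(1+b)) \<le> 1/(2*(a+b))" using p by (intro divide_left_mono) auto
  then have "(a+b+2) * (1/((1+a)*(1+b))) \<le> (a+b+2) * (1/(2*(a+b)))" using p by (intro mult_left_mono) auto
  then show ?thesis unfolding e1 e2 .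
qed

lemma merge_sum:
  fixes d :: "nat \<Rightarrow> real"
  assumes "finite Q" "Q \<noteq> {}" "\<forall>x\<in>Q. d x \<ge> 1"
  shows "(\<Sum>x\<in>Q. 1/(1 + d x)) \<le> (real (card Q) - 1)/2 + 1/(1 + (\<Sum>x\<in>Q. d x) - (real (card Q) - 1))"
  using assms
proof (induction Q rule: finite_ne_induct)
  case (singleton x) then show ?case by simp
next
  case (insert x F)
  have dx: "d x \<ge> 1" using insert by simp
  have sF: "(\<Sum>y\<in>F. d y) \<ge> real (card F)"
  proof -
    have "(\<Sum>y\<in>F. (1::real)) \<le> (\<Sum>y\<in>F. d y)" using insert by (intro sum_mono) auto
    then show ?thesis by simp
  qed
  define T where "T = (\<Sum>y\<in>F. d y) - (real (card F) - 1)"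
  have T1: "T \<ge> 1" using sF by (simp add: T_def)
  have IH: "(\<Sum>y\<in>F. 1/(1 + d y)) \<le> (real (card F) - 1)/2 + 1/(1 + T)"
    using insert by (simp add: T_def)
  have "(\<Sum>y\<in>insert x F. 1/(1 + d y)) = 1/(1 + d x) + (\<Sum>y\<in>F. 1/(1 + d y))"
    using insert by simp
  also have "\<dots> \<le> 1/(1 + d x) + 1/(1 + T) + (real (card F) - 1)/2" using IH by simp
  also have "\<dots> \<le> 1/2 + 1/(d x + T) + (real (card F) - 1)/2" using merge2[OF dx T1] by simp
  also have "\<dots> = (real (card (insert x F)) - 1)/2 + 1/(1 + (\<Sum>y\<in>insert x F. d y) - (real (card (insert x F)) - 1))"
  proof -
    have c: "real (card (insert x F)) = real (card F) + 1" using insert by simp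
    have s: "(\<Sum>y\<in>insert x F. d y) = d x + (\<Sum>y\<in>F. d y)" using insert by simp
    have t: "1 + (d x + (\<Sum>y\<in>F. d y)) - (real (card F) + 1 - 1) = d x + T" by (simp add: T_def)
    show ?thesis unfolding c s t by (simp add: field_simps)
  qed
  finally show ?case .
qed

context lhs begin

lemma sumO_ge4:
  assumes m: "card Oset \<ge> 4"
  shows "(\<Sum>x\<in>Oset. DD {x}) \<le> real (card Oset) - real k / (real k + 1)"
proof -
  have "(\<Sum>x\<in>Oset. DD {x}) \<le> (\<Sum>x\<in>Oset. 3/4)"
  proof (rule sum_mono)
    fix x assume x: "x \<in> Oset"
    define d where "d = real (card (Nb x))"
    have d1: "d \<ge> 1" using Nb_nonempty[OF x] by (simp add: d_def)
    have "DD {x} \<le> (1 + d/2)/(1 + d)" using bound_O[OF x] by (simp add: d_def)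
    also have "\<dots> \<le> 3/4" using d1 by (simp add: field_simps)
    finally show "DD {x} \<le> 3/4" .
  qed
  also have "\<dots> = 3/4 * real (card Oset)" by simp
  also have "\<dots> \<le> real (card Oset) - 1" using m by simp
  also have "\<dots> \<le> real (card Oset) - real k / (real k + 1)" by (simp add: field_simps)
  finally show ?thesis .
qed

lemma sumO_3:
  assumes m: "card Oset = 3"
  shows "(\<Sum>x\<in>Oset. DD {x}) \<le> real (card Oset) - real k / (real k + 1)"
proof -
  define d where "d x = real (card (Nb x))" for x
  have d1: "\<forall>x\<in>Oset. d x \<ge> 1" using Nb_nonempty by (simp add: d_def)
  define S where "S = (\<Sum>x\<in>Oset. d x)"
  have Sk: "S \<ge> real k" using deg_sum by (simp add: S_def d_def)
  have S3: "S \<ge> 3"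
  proof -
    have "(\<Sum>x\<in>Oset. (1::real)) \<le> S" unfolding S_def using d1 by (intro sum_mono) auto
    then show ?thesis using m by simp
  qed
  have "(\<Sum>x\<in>Oset. DD {x}) \<le> (\<Sum>x\<in>Oset. 1/2 + (1/2) * (1/(1 + d x)))"
  proof (rule sum_mono)
    fix x assume x: "x \<in> Oset"
    have "DD {x} \<le> (1 + d x/2)/(1 + d x)" using bound_O[OF x] by (simp add: d_def)
    also have "\<dots> = 1/2 + (1/2) * (1/(1 + d x))"
    proof -
      have "1 + d x > 0" using d1 x by force
      then show ?thesis by (simp add: field_simps)
    qed
    finally show "DD {x} \<le> 1/2 + (1/2) * (1/(1 + d x))" .
  qed
  also have "\<dots> = 3/2 + (1/2) * (\<Sum>x\<in>Oset. 1/(1 + d x))"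
    using m by (simp add: sum.distrib sum_distrib_left)
  also have "\<dots> \<le> 3/2 + (1/2) * (1 + 1/(S - 1))"
  proof -
    have "(\<Sum>x\<in>Oset. 1/(1 + d x)) \<le> (real (card Oset) - 1)/2 + 1/(1 + S - (real (card Oset) - 1))"
      unfolding S_def using merge_sum[OF finO O_nonempty d1] .
    also have "\<dots> = 1 + 1/(S - 1)" using m by simp
    finally show ?thesis by simp
  qed
  also have "\<dots> \<le> 3 - real k / (real k + 1)"
  proof -
    have "2 * (S - 1) \<ge> real k + 1" using Sk S3 by (simp add: algebra_simps)
    then have "1/(S - 1) \<le> 2 * (1/(real k + 1))" using S3 by (simp add: field_simps)
    moreover have "3 - real k / (real k + 1) = 2 + 1/(real k + 1)" by (simp add: field_simps)
    moreover have "3/2 + (1/2) * (1 + 1/(S - 1)) = 2 + (1/2) * (1/(S - 1))" by (simp add: algebra_simps)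
    ultimately show ?thesis by linarith
  qed
  finally show ?thesis using m by simp
qed

end

context lhs begin

definition aa :: real where "aa = Vq k 0 (k - 1)"

lemma ka: "real k * aa = hh k" using Vq_a1[OF k1] by (simp add: aa_def mult.commute)

lemma hh_succ: "hh (k + 1) = real k * aa + 1 / (real k + 1)" using ka by simp

lemma O_sub: "Oset \<subseteq> NN - CC" unfolding Oset_def by auto

lemma decomp: "(\<Sum>i\<in>NN. DD {i}) \<le> (\<Sum>i\<in>CC. DD {i}) + (\<Sum>i\<in>Oset. DD {i}) + (real n - real k - real (card Oset))"
proof -
  have s1: "(\<Sum>i\<in>NN. DD {i}) = (\<Sum>i\<in>NN - CC. DD {i}) + (\<Sum>i\<in>CC. DD {i})"
    using sum.subset_diff[OF CN] by simp
  have f2: "finite (NN - CC)" by simp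
  have s2: "(\<Sum>i\<in>NN - CC. DD {i}) = (\<Sum>i\<in>(NN - CC) - Oset. DD {i}) + (\<Sum>i\<in>Oset. DD {i})"
    using sum.subset_diff[OF O_sub f2] by simp
  have s3: "(\<Sum>i\<in>(NN - CC) - Oset. DD {i}) \<le> (\<Sum>i\<in>(NN - CC) - Oset. 1)"
    by (rule sum_mono) (use bound_R in auto)
  have c1: "card (NN - CC) = n - k" using card_Diff_subset[OF _ CN] by simp
  have c2: "card ((NN - CC) - Oset) = (n - k) - card Oset" using card_Diff_subset[OF finO O_sub] c1 by simp
  have c3: "card Oset \<le> n - k" using card_mono[OF f2 O_sub] c1 by simp
  have "(\<Sum>i\<in>(NN - CC) - Oset. (1::real)) = real n - real k - real (card Oset)"
    using c2 c3 kn by (simp add: of_nat_diff)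
  then show ?thesis using s1 s2 s3 by linarith
qed

lemma target_from_O:
  assumes "(\<Sum>i\<in>Oset. DD {i}) \<le> real (card Oset) - real k / (real k + 1)"
  shows "(\<Sum>i\<in>NN. DD {i}) \<le> hh (k + 1) + real (n - (k + 1))"
proof -
  have "(\<Sum>i\<in>CC. DD {i}) \<le> (\<Sum>i\<in>CC. aa)" by (rule sum_mono) (use bound_C in \<open>auto simp: aa_def\<close>)
  then have C: "(\<Sum>i\<in>CC. DD {i}) \<le> real k * aa" by simp
  have e: "real k / (real k + 1) = 1 - 1 / (real k + 1)" by (simp add: field_simps)
  have n: "real (n - (k + 1)) = real n - real k - 1" using kn by (simp add: of_nat_diff)
  show ?thesis using decomp C assms unfolding hh_succ e n by linarith
qed

lemma Nb_sub: "x \<in> Oset \<Longrightarrow> i \<in> Nb x \<Longrightarrow> i \<in> CC \<or> i \<in> Oset"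
proof -
  assume x: "x \<in> Oset" and i: "i \<in> Nb x"
  have adj: "adj i x" "i \<in> NN" using i unfolding Nb_def by auto
  show ?thesis
  proof (cases "i \<in> CC")
    case False then show ?thesis using adj unfolding Oset_def by blast
  qed simp
qed

lemma case_m1:
  assumes m: "card Oset = 1"
  shows "(\<Sum>i\<in>NN. DD {i}) \<le> hh (k + 1) + real (n - (k + 1))"
proof -
  obtain x where Ox: "Oset = {x}" using m card_1_singletonE by blast
  have xN: "x \<in> NN" "x \<notin> CC" using Ox O_sub by auto
  have NbC: "Nb x \<subseteq> CC"
  proof
    fix i assume i: "i \<in> Nb x"
    then have "i \<noteq> x" unfolding Nb_def by auto
    then show "i \<in> CC" using Nb_sub[of x i] i Ox by auto
  qed
  have "E \<subseteq> (\<lambda>i. {i, x}) ` Nb x" using E_sub_O Ox by simp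
  then have "card E \<le> card (Nb x)" using finNb by (meson card_image_le card_mono dual_order.trans finite_imageI)
  then have "card CC \<le> card (Nb x)" using cardE by simp
  then have NbCe: "Nb x = CC" using card_subset_eq[OF _ NbC] card_mono[OF _ NbC] by (simp add: le_antisym)
  define C' where "C' = insert x CC"
  have C'N: "C' \<subseteq> NN" using xN CN by (auto simp: C'_def)
  have cC': "card C' = k + 1" using xN by (simp add: C'_def)
  have cl: "\<forall>a\<in>C'. \<forall>b\<in>C'. a \<noteq> b \<longrightarrow> adj a b"
  proof (intro ballI impI)
    fix a b assume ab: "a \<in> C'" "b \<in> C'" "a \<noteq> b"
    have ax: "adj y x" "adj x y" if "y \<in> CC" for y
    proof -
      have "y \<in> Nb x" using that NbCe by simp
      then show "adj y x" unfolding Nb_def by simp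
      then show "adj x y" by (rule adj_sym)
    qed
    show "adj a b" using ab ax adjC unfolding C'_def by auto
  qed
  have inC: "DD {i} \<le> Vq (k+1) 0 k" if i: "i \<in> C'" for i
  proof -
    have "DD {i} \<le> Vq (k+1) (card {i} - card ({i} \<inter> C')) (k + 1 - card ({i} \<inter> C'))"
      by (rule Vbound[OF C'N cC' cl]) (use i C'N in auto)
    then show ?thesis using i by simp
  qed
  have "(\<Sum>i\<in>NN. DD {i}) = (\<Sum>i\<in>NN - C'. DD {i}) + (\<Sum>i\<in>C'. DD {i})"
    using sum.subset_diff[OF C'N] by simp
  also have "\<dots> \<le> (\<Sum>i\<in>NN - C'. 1) + (\<Sum>i\<in>C'. Vq (k+1) 0 k)"
    using bound_R inC by (intro add_mono sum_mono) auto
  also have "\<dots> = real (n - (k + 1)) + real (k+1) * Vq (k+1) 0 k"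
    using card_Diff_subset[OF finite_subset[OF C'N] C'N] cC' by simp
  also have "real (k+1) * Vq (k+1) 0 k = hh (k+1)" using Vq_a1[of "k+1"] by (simp add: mult.commute)
  finally show ?thesis by simp
qed

end

context lhs begin

definition uu :: real where "uu = Vq k 1 (k - 1)"

lemma uu_le_aa: "uu \<le> aa" unfolding uu_def aa_def using Vq_mono_d[of "k - 1" k 0] k1 by simp

lemma uu_nonneg: "uu \<ge> 0" unfolding uu_def by (rule Vq_nonneg)

lemma uu_half: "uu \<le> 1/2"
proof -
  have "uu \<le> 1 / (real (k - (k - 1)) + real (1::nat))" unfolding uu_def using k1 by (intro Vq_le) auto
  then show ?thesis using k1 by simp
qed

lemma ka2: "real k * aa = 1 + real (k - 1) * Vq k 0 (k - 2)"
proof (cases "k = 1")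
  case True then show ?thesis unfolding aa_def by simp
next
  case False
  then have k2: "k \<ge> 2" using k1 by simp
  then obtain j where j: "k - 1 = Suc j" "j = k - 2" by (cases "k - 1") auto
  have kk: "k - Suc j = 1" using j k2 by simp
  have "aa = (1 + (real (k - Suc j) * real (Suc j)) * Vq k 0 j) / (real (k - Suc j) + real (0::nat) + real (k - Suc j) * real (Suc j))"
    unfolding aa_def j(1) by (rule Vq_Suc)
  also have "\<dots> = (1 + real (k - 1) * Vq k 0 (k - 2)) / real k"
    using kk j k2 by (simp add: of_nat_diff)
  finally show ?thesis using k2 by (simp add: field_simps)
qed

lemma pair_C_out: "y \<in> CC \<Longrightarrow> v \<in> NN - CC \<Longrightarrow> DD {v, y} \<le> uu"
proof -
  assume y: "y \<in> CC" and v: "v \<in> NN - CC"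
  have "DD {v, y} \<le> Vq k (card {v, y} - card ({v, y} \<inter> CC)) (k - card ({v, y} \<inter> CC))"
    by (rule Vbound[OF CN]) (use y v adjC CN in auto)
  moreover have "{v, y} \<inter> CC = {y}" using y v by auto
  moreover have "card {v, y} = 2" using y v by auto
  ultimately show ?thesis by (simp add: uu_def)
qed

lemma pair_C_C: "y \<in> CC \<Longrightarrow> i \<in> CC \<Longrightarrow> i \<noteq> y \<Longrightarrow> DD {y, i} \<le> Vq k 0 (k - 2)"
proof -
  assume y: "y \<in> CC" and i: "i \<in> CC" "i \<noteq> y"
  have "DD {y, i} \<le> Vq k (card {y, i} - card ({y, i} \<inter> CC)) (k - card ({y, i} \<inter> CC))"
    by (rule Vbound[OF CN]) (use y i adjC CN in auto)
  moreover have "{y, i} \<inter> CC = {y, i}" using y i by auto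
  moreover have "card {y, i} = 2" using i by auto
  ultimately show ?thesis by simp
qed

end

locale m2 = lhs +
  fixes x z :: nat
  assumes Oxz: "Oset = {x, z}" and xz: "x \<noteq> z"
begin

definition AA where "AA = Nb x \<inter> CC"
definition BB where "BB = Nb z \<inter> CC"
definition tt :: real where "tt = (if adj x z then 1 else 0)"

lemma xzN: "x \<in> NN - CC" "z \<in> NN - CC" using Oxz O_sub by auto

lemma finAB: "finite AA" "finite BB" by (auto simp: AA_def BB_def)

lemma Nbx: "Nb x = AA \<union> (if adj x z then {z} else {})"
proof
  show "Nb x \<subseteq> AA \<union> (if adj x z then {z} else {})"
  proof
    fix i assume i: "i \<in> Nb x"
    then have "i \<noteq> x" "adj i x" unfolding Nb_def by auto
    then show "i \<in> AA \<union> (if adj x z then {z} else {})"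
      using Nb_sub[of x i] i Oxz adj_sym unfolding AA_def by auto
  qed
  show "AA \<union> (if adj x z then {z} else {}) \<subseteq> Nb x"
    using xzN xz adj_sym unfolding AA_def Nb_def by auto
qed

lemma Nbz: "Nb z = BB \<union> (if adj x z then {x} else {})"
proof
  show "Nb z \<subseteq> BB \<union> (if adj x z then {x} else {})"
  proof
    fix i assume i: "i \<in> Nb z"
    then have "i \<noteq> z" "adj i z" unfolding Nb_def by auto
    then show "i \<in> BB \<union> (if adj x z then {x} else {})"
      using Nb_sub[of z i] i Oxz adj_sym unfolding BB_def by auto
  qed
  show "BB \<union> (if adj x z then {x} else {}) \<subseteq> Nb z"
    using xzN xz adj_sym unfolding BB_def Nb_def by auto
qed

lemma bound_x: "DD {x} \<le> (1 + real (card AA) * uu + tt * DD {x, z}) / (1 + real (card AA) + tt)"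
proof -
  have xN: "x \<in> NN" using xzN by auto
  have dis: "AA \<inter> (if adj x z then {z} else {}) = {}" using xzN unfolding AA_def by auto
  have fz: "finite (if adj x z then {z} else {})" by simp
  have sA: "(\<Sum>i\<in>AA. DD {x, i}) \<le> real (card AA) * uu"
  proof -
    have "(\<Sum>i\<in>AA. DD {x, i}) \<le> (\<Sum>i\<in>AA. uu)"
      by (rule sum_mono) (use pair_C_out xzN in \<open>auto simp: AA_def\<close>)
    then show ?thesis by simp
  qed
  have sZ: "(\<Sum>i\<in>(if adj x z then {z} else {}). DD {x, i}) = tt * DD {x, z}" by (simp add: tt_def)
  have cZ: "real (card (if adj x z then {z} else {})) = tt" by (simp add: tt_def)
  have e: "DD {x} = (1 + ((\<Sum>i\<in>AA. DD {x, i}) + tt * DD {x, z})) / (1 + (real (card AA) + tt))"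
    unfolding node[OF xN] Nbx sum.union_disjoint[OF finAB(1) fz dis] card_Un_disjoint[OF finAB(1) fz dis]
    using sZ cZ by simp
  have p: "1 + (real (card AA) + tt) > 0" by (simp add: tt_def add_pos_nonneg)
  show ?thesis unfolding e using sA p by (simp add: divide_right_mono add.assoc)
qed

lemma bound_z: "DD {z} \<le> (1 + real (card BB) * uu + tt * DD {x, z}) / (1 + real (card BB) + tt)"
proof -
  have zN: "z \<in> NN" using xzN by auto
  have dis: "BB \<inter> (if adj x z then {x} else {}) = {}" using xzN unfolding BB_def by auto
  have fz: "finite (if adj x z then {x} else {})" by simp
  have sB: "(\<Sum>i\<in>BB. DD {z, i}) \<le> real (card BB) * uu"
  proof -
    have "(\<Sum>i\<in>BB. DD {z, i}) \<le> (\<Sum>i\<in>BB. uu)"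
      by (rule sum_mono) (use pair_C_out xzN in \<open>auto simp: BB_def\<close>)
    then show ?thesis by simp
  qed
  have sZ: "(\<Sum>i\<in>(if adj x z then {x} else {}). DD {z, i}) = tt * DD {x, z}" by (simp add: tt_def insert_commute)
  have cZ: "real (card (if adj x z then {x} else {})) = tt" by (simp add: tt_def)
  have e: "DD {z} = (1 + ((\<Sum>i\<in>BB. DD {z, i}) + tt * DD {x, z})) / (1 + (real (card BB) + tt))"
    unfolding node[OF zN] Nbz sum.union_disjoint[OF finAB(2) fz dis] card_Un_disjoint[OF finAB(2) fz dis]
    using sZ cZ by simp
  have p: "1 + (real (card BB) + tt) > 0" by (simp add: tt_def add_pos_nonneg)
  show ?thesis unfolding e using sB p by (simp add: divide_right_mono add.assoc)
qed

lemma pair_half: "DD {x, z} \<le> 1/2"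
  using G1[of "{x, z}"] xzN xz by auto

end

context m2 begin

lemma AAC: "AA \<subseteq> CC" "BB \<subseteq> CC" by (auto simp: AA_def BB_def)

lemma inAA: "y \<in> CC \<Longrightarrow> y \<in> AA \<longleftrightarrow> adj y x"
  using xzN adjN unfolding AA_def Nb_def by auto

lemma inBB: "y \<in> CC \<Longrightarrow> y \<in> BB \<longleftrightarrow> adj y z"
  using xzN adjN unfolding BB_def Nb_def by auto

lemma card_rel: "real k = real (card AA) + real (card BB) + tt"
proof -
  define U1 where "U1 = (\<lambda>i. {i, x}) ` AA"
  define U2 where "U2 = (\<lambda>i. {i, z}) ` BB"
  define U3 where "U3 = (if adj x z then {{x, z}} else {})"
  have EU: "E = U1 \<union> U2 \<union> U3"
  proof
    have "E \<subseteq> (\<lambda>i. {i, x}) ` Nb x \<union> (\<lambda>i. {i, z}) ` Nb z" using E_sub_O Oxz by simp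
    also have "\<dots> \<subseteq> U1 \<union> U2 \<union> U3" unfolding Nbx Nbz U1_def U2_def U3_def by (auto simp: insert_commute)
    finally show "E \<subseteq> U1 \<union> U2 \<union> U3" .
  next
    show "U1 \<union> U2 \<union> U3 \<subseteq> E"
    proof -
      have "{i, x} \<in> E" if "i \<in> AA" for i
      proof -
        have "adj x i" using that AAC inAA adj_sym by blast
        then have "{x, i} \<in> E" using adj_outE xzN by blast
        then show ?thesis by (simp add: insert_commute)
      qed
      moreover have "{i, z} \<in> E" if "i \<in> BB" for i
      proof -
        have "adj z i" using that AAC inBB adj_sym by blast
        then have "{z, i} \<in> E" using adj_outE xzN by blast
        then show ?thesis by (simp add: insert_commute)
      qed
      moreover have "{x, z} \<in> E" if "adj x z" using that adj_outE xzN by blast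
      ultimately show ?thesis unfolding U1_def U2_def U3_def by auto
    qed
  qed
  have i1: "inj_on (\<lambda>i. {i, x}) AA" by (auto simp: inj_on_def doubleton_eq_iff)
  have i2: "inj_on (\<lambda>i. {i, z}) BB" by (auto simp: inj_on_def doubleton_eq_iff)
  have d12: "U1 \<inter> U2 = {}" using xz xzN AAC unfolding U1_def U2_def by (auto simp: doubleton_eq_iff)
  have d3: "(U1 \<union> U2) \<inter> U3 = {}" using xz xzN AAC unfolding U1_def U2_def U3_def by (auto simp: doubleton_eq_iff)
  have f: "finite U1" "finite U2" "finite U3" using finAB unfolding U1_def U2_def U3_def by auto
  have "card E = card U1 + card U2 + card U3"
    unfolding EU using card_Un_disjoint[OF _ _ d3] card_Un_disjoint[OF _ _ d12] f by simp
  moreover have "card U1 = card AA" "card U2 = card BB" using card_image[OF i1] card_image[OF i2] by (auto simp: U1_def U2_def)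
  moreover have "real (card U3) = tt" by (simp add: U3_def tt_def)
  ultimately show ?thesis using cardE by simp
qed

lemma tt01: "tt = 0 \<or> tt = 1" by (simp add: tt_def)

lemma bound_y: "y \<in> CC \<Longrightarrow> DD {y} \<le> aa - ((if y \<in> AA then 1 else 0) + (if y \<in> BB then 1 else 0)) * (aa - uu) / (real k + 2)"
proof -
  assume y: "y \<in> CC"
  define V where "V = (if y \<in> AA then {x} else {}) \<union> (if y \<in> BB then {z} else {})"
  define e where "e = (if y \<in> AA then 1 else 0) + (if y \<in> BB then 1 else (0::real))"
  have yN: "y \<in> NN" using y CN by auto
  have NbY: "Nb y = (CC - {y}) \<union> V"
  proof
    show "Nb y \<subseteq> CC - {y} \<union> V"
    proof
      fix i assume i: "i \<in> Nb y"
      then have ai: "adj i y" "i \<noteq> y" "i \<in> NN" unfolding Nb_def by auto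
      show "i \<in> CC - {y} \<union> V"
      proof (cases "i \<in> CC")
        case True then show ?thesis using ai by auto
      next
        case False
        then have "i \<in> Oset" unfolding Oset_def using ai by blast
        then have "i = x \<or> i = z" using Oxz by auto
        then show ?thesis using ai y inAA inBB adj_sym unfolding V_def by auto
      qed
    qed
    show "CC - {y} \<union> V \<subseteq> Nb y"
      using y adjC CN xzN inAA inBB adj_sym unfolding Nb_def V_def by auto
  qed
  have dis: "(CC - {y}) \<inter> V = {}" using xzN unfolding V_def by auto
  have fV: "finite V" by (simp add: V_def)
  have cV: "real (card V) = e" using xz unfolding V_def e_def by auto
  have e2: "e \<le> 2" "e \<ge> 0" by (auto simp: e_def)
  have s1: "(\<Sum>i\<in>CC - {y}. DD {y, i}) \<le> real (k - 1) * Vq k 0 (k - 2)"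
  proof -
    have "(\<Sum>i\<in>CC - {y}. DD {y, i}) \<le> (\<Sum>i\<in>CC - {y}. Vq k 0 (k - 2))"
      by (rule sum_mono) (use pair_C_C y in auto)
    then show ?thesis using y by simp
  qed
  have s2: "(\<Sum>i\<in>V. DD {y, i}) \<le> e * uu"
  proof -
    have "(\<Sum>i\<in>V. DD {y, i}) \<le> (\<Sum>i\<in>V. uu)"
    proof (rule sum_mono)
      fix i assume "i \<in> V"
      then have "i \<in> NN - CC" using xzN unfolding V_def by (auto split: if_splits)
      then show "DD {y, i} \<le> uu" using pair_C_out[OF y] by (simp add: insert_commute)
    qed
    then show ?thesis using cV by simp
  qed
  have f1: "finite (CC - {y})" by simp
  have cN: "real (card (Nb y)) = real k - 1 + e"
    unfolding NbY card_Un_disjoint[OF f1 fV dis] using y cV k1 by (simp add: of_nat_diff)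
  have "DD {y} = (1 + ((\<Sum>i\<in>CC - {y}. DD {y, i}) + (\<Sum>i\<in>V. DD {y, i}))) / (real k + e)"
    unfolding node[OF yN] cN unfolding NbY sum.union_disjoint[OF f1 fV dis] by simp
  also have "\<dots> \<le> (1 + (real (k - 1) * Vq k 0 (k - 2) + e * uu)) / (real k + e)"
    using s1 s2 e2 k1 by (intro divide_right_mono) auto
  also have "\<dots> = (real k * aa + e * uu) / (real k + e)" using ka2 by simp
  also have "\<dots> \<le> aa - e * (aa - uu) / (real k + 2)"
  proof -
    have p: "real k + e > 0" using k1 e2 by simp
    have eq: "(real k * aa + e * uu) / (real k + e) = aa - e * (aa - uu) / (real k + e)"
      using p by (simp add: field_simps)
    have "e * (aa - uu) / (real k + 2) \<le> e * (aa - uu) / (real k + e)"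
      using p e2 uu_le_aa by (intro divide_left_mono) auto
    then have "aa - e * (aa - uu) / (real k + e) \<le> aa - e * (aa - uu) / (real k + 2)" by (rule diff_left_mono)
    then show ?thesis unfolding eq .
  qed
  finally show ?thesis by (simp add: e_def)
qed

lemma sum_C: "(\<Sum>i\<in>CC. DD {i}) \<le> real k * aa - (real (card AA) + real (card BB)) * (aa - uu) / (real k + 2)"
proof -
  have "(\<Sum>i\<in>CC. DD {i}) \<le> (\<Sum>y\<in>CC. aa - ((if y \<in> AA then 1 else 0) + (if y \<in> BB then 1 else 0)) * (aa - uu) / (real k + 2))"
    by (rule sum_mono) (rule bound_y)
  also have "\<dots> = real k * aa - (\<Sum>y\<in>CC. (if y \<in> AA then 1 else 0) + (if y \<in> BB then 1 else (0::real))) * (aa - uu) / (real k + 2)"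
    by (simp add: sum_subtractf sum_divide_distrib[symmetric] sum_distrib_right[symmetric])
  also have "(\<Sum>y\<in>CC. (if y \<in> AA then 1 else 0) + (if y \<in> BB then 1 else (0::real))) = real (card AA) + real (card BB)"
  proof -
    have fC: "finite CC" by simp
    have a: "(\<Sum>y\<in>CC. if y \<in> AA then 1 else (0::real)) = real (card AA)"
    proof -
      have "(\<Sum>y\<in>CC. if y \<in> AA then 1 else (0::real)) = (\<Sum>y\<in>{y\<in>CC. y \<in> AA}. 1)"
        by (rule sum.inter_filter[OF fC, symmetric])
      also have "{y\<in>CC. y \<in> AA} = AA" using AAC by blast
      finally show ?thesis by simp
    qed
    have b: "(\<Sum>y\<in>CC. if y \<in> BB then 1 else (0::real)) = real (card BB)"
    proof -
      have "(\<Sum>y\<in>CC. if y \<in> BB then 1 else (0::real)) = (\<Sum>y\<in>{y\<in>CC. y \<in> BB}. 1)"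
        by (rule sum.inter_filter[OF fC, symmetric])
      also have "{y\<in>CC. y \<in> BB} = BB" using AAC by blast
      finally show ?thesis by simp
    qed
    show ?thesis using a b by (simp add: sum.distrib)
  qed
  finally show ?thesis .
qed

lemma sum_C0: "(\<Sum>i\<in>CC. DD {i}) \<le> real k * aa"
proof -
  have "(\<Sum>i\<in>CC. DD {i}) \<le> (\<Sum>i\<in>CC. aa)" by (rule sum_mono) (use bound_C in \<open>auto simp: aa_def\<close>)
  then show ?thesis by simp
qed

lemma pair_refined:
  assumes t: "adj x z" and A0: "AA = {}"
  shows "DD {x, z} \<le> (1 + real (card BB) * uu) / (2 + real (card BB))"
proof -
  have S: "{x, z} \<subseteq> NN" "{x, z} \<noteq> {}" using xzN by auto
  have cS: "card {x, z} = 2" using xz by simp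
  have "DD {x, z} \<le> (1 + real (card BB) * uu) / (real (card {x, z}) + real (card BB))"
  proof (rule gen_bound[OF S])
    show "uu * real (card {x, z}) \<le> 1" using cS uu_half by simp
    show "0 \<le> real (card BB)" by simp
  next
    fix i assume i: "i \<in> NN - {x, z}" and c: "card {j\<in>{x, z}. adj i j} > 0"
    then obtain j where j: "j \<in> {x, z}" "adj i j" by (metis (mono_tags, lifting) card_gt_0_iff empty_Collect_eq)
    have iB: "i \<in> BB"
    proof (cases "j = x")
      case True
      then have "i \<in> Nb x" using i j unfolding Nb_def by auto
      then show ?thesis using Nbx A0 t i by auto
    next
      case False
      then have "j = z" using j by auto
      then have "i \<in> Nb z" using i j unfolding Nb_def by auto
      then show ?thesis using Nbz i by (auto split: if_splits)
    qed
    have sub: "{x, z, i} \<subseteq> NN" "{x, z, i} \<inter> CC \<noteq> {}" using i iB AAC xzN by auto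
    have "DD (insert i {x, z}) \<le> Vq k (card {x, z, i} - card ({x, z, i} \<inter> CC)) (k - card ({x, z, i} \<inter> CC))"
      using Vbound[OF CN _ _ sub] adjC by (auto simp: insert_commute)
    moreover have "{x, z, i} \<inter> CC = {i}" using iB AAC xzN by auto
    moreover have "card {x, z, i} = 3" using i xz by auto
    ultimately have "DD (insert i {x, z}) \<le> Vq k 2 (k - 1)" by simp
    also have "\<dots> \<le> uu" unfolding uu_def using Vq_mono_d[of "k - 1" k 1] k1 by (simp add: numeral_2_eq_2)
    finally show "DD (insert i {x, z}) \<le> uu" .
  next
    have "(\<Sum>i\<in>BB. (1::real)) \<le> (\<Sum>i\<in>BB. real (card {j\<in>{x, z}. adj i j}))"
    proof (rule sum_mono)
      fix i assume "i \<in> BB"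
      then have "adj i z" using inBB AAC by auto
      then have "{j\<in>{x, z}. adj i j} \<noteq> {}" by auto
      then show "1 \<le> real (card {j\<in>{x, z}. adj i j})" by (simp add: card_gt_0_iff Suc_le_eq)
    qed
    also have "\<dots> \<le> (\<Sum>i\<in>NN - {x, z}. real (card {j\<in>{x, z}. adj i j}))"
      by (rule sum_mono2) (use AAC xzN in auto)
    finally show "real (card BB) \<le> (\<Sum>i\<in>NN - {x, z}. real (card {j\<in>{x, z}. adj i j}))" by simp
  qed
  then show ?thesis using cS by simp
qed

end

lemma merge3: "(a::real) \<ge> 1 \<Longrightarrow> b \<ge> 1 \<Longrightarrow> 1/(2+a) + 1/(2+b) \<le> 1/3 + 1/(a+b+1)"
proof -
  assume a: "a \<ge> 1" "b \<ge> 1"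
  have p: "2 + a > 0" "2 + b > 0" "a + b + 1 > 0" using a by auto
  have e1: "1/(2+a) + 1/(2+b) = (a+b+4) * (1/((2+a)*(2+b)))" using p by (simp add: field_simps)
  have e2: "1/3 + 1/(a+b+1) = (a+b+4) * (1/(3*(a+b+1)))" using p by (simp add: field_simps)
  have "3*(a+b+1) \<le> (2+a)*(2+b)"
  proof -
    have "0 \<le> (a - 1) * (b - 1)" using a by simp
    then show ?thesis by (simp add: algebra_simps)
  qed
  then have "1/((2+a)*(2+b)) \<le> 1/(3*(a+b+1))" using p by (intro divide_left_mono) auto
  then have "(a+b+4) * (1/((2+a)*(2+b))) \<le> (a+b+4) * (1/(3*(a+b+1)))" using p by (intro mult_left_mono) auto
  then show ?thesis unfolding e1 e2 .
qed

lemma m2_small: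
  fixes u a tt :: real and k p q :: nat
  assumes u0: "0 \<le> u" "u \<le> a" "u \<le> 1/2" and k1: "k \<ge> 1"
    and t01: "tt = 0 \<or> tt = 1"
    and kk: "real k = real p + real q + tt"
    and pq: "tt = 0 \<longrightarrow> p \<ge> 1 \<and> q \<ge> 1"
    and R0: "k \<ge> 2 \<longrightarrow> 2*u + (1-u)*(1/2 + 1/real k) \<le> 1 + 1/(real k+1) + real k*(a-u)/(real k+2)"
    and R1: "k \<ge> 3 \<longrightarrow> 2*u + (3/2 - 2*u)*(1/3 + 1/real k) \<le> 1 + 1/(real k+1) + (real k-1)*(a-u)/(real k+2)"
    and R2: "3/4 + u + (3/2 - 2*u)/(real k+1) \<le> 1 + 1/(real k+1) + (real k-1)*(a-u)/(real k+2)"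
  shows "(1 + real p*u + tt*(1/2))/(1 + real p + tt) + (1 + real q*u + tt*(1/2))/(1 + real q + tt)
         \<le> 1 + 1/(real k+1) + (real p + real q)*(a-u)/(real k+2)"
proof (cases "tt = 0")
  case True
  then have p1: "p \<ge> 1" "q \<ge> 1" using pq by auto
  have kpq: "real k = real p + real q" using kk True by simp
  have k2: "k \<ge> 2" using kpq p1 by linarith
  have ep: "(1 + real p*u)/(1 + real p) = u + (1-u) * (1/(1+real p))" using p1 by (simp add: field_simps)
  have eq: "(1 + real q*u)/(1 + real q) = u + (1-u) * (1/(1+real q))" using p1 by (simp add: field_simps)
  have m: "1/(1+real p) + 1/(1+real q) \<le> 1/2 + 1/real k"
    using merge2[of "real p" "real q"] p1 kpq by simp
  have "(1-u) * (1/(1+real p) + 1/(1+real q)) \<le> (1-u) * (1/2 + 1/real k)"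
    using m u0 by (intro mult_left_mono) auto
  then have "(1 + real p*u)/(1 + real p) + (1 + real q*u)/(1 + real q) \<le> 2*u + (1-u)*(1/2 + 1/real k)"
    unfolding ep eq by (simp add: algebra_simps)
  also have "\<dots> \<le> 1 + 1/(real k+1) + real k*(a-u)/(real k+2)" using R0 k2 by simp
  finally show ?thesis using True kpq by simp
next
  case False
  then have t1: "tt = 1" using t01 by simp
  have kpq: "real k = real p + real q + 1" using kk t1 by simp
  have gen: "(1 + real r*u + 1/2)/(2 + real r) = u + (3/2 - 2*u) * (1/(2+real r))" for r :: nat
    by (simp add: field_simps)
  show ?thesis
  proof (cases "p = 0")
    case True
    have qk: "real q = real k - 1" using kpq True by simp
    have "(1 + real p*u + tt*(1/2))/(1 + real p + tt) + (1 + real q*u + tt*(1/2))/(1 + real q + tt)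
        = 3/4 + (u + (3/2 - 2*u) * (1/(2+real q)))"
      using True t1 gen[of q] by (simp add: add.commute add.left_commute)
    also have "\<dots> = 3/4 + u + (3/2 - 2*u)/(real k+1)" using qk by simp
    also have "\<dots> \<le> 1 + 1/(real k+1) + (real k-1)*(a-u)/(real k+2)" using R2 .
    finally show ?thesis using True qk by simp
  next
    case pF: False
    show ?thesis
    proof (cases "q = 0")
      case True
      have pk: "real p = real k - 1" using kpq True by simp
      have "(1 + real p*u + tt*(1/2))/(1 + real p + tt) + (1 + real q*u + tt*(1/2))/(1 + real q + tt)
          = (u + (3/2 - 2*u) * (1/(2+real p))) + 3/4"
        using True t1 gen[of p] by (simp add: add.commute add.left_commute)
      also have "\<dots> = 3/4 + u + (3/2 - 2*u)/(real k+1)" using pk by simp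
      also have "\<dots> \<le> 1 + 1/(real k+1) + (real k-1)*(a-u)/(real k+2)" using R2 .
      finally show ?thesis using True pk by simp
    next
      case qF: False
      have p1: "real p \<ge> 1" "real q \<ge> 1" using pF qF by auto
      have k3: "k \<ge> 3" using kpq p1 by linarith
      have m: "1/(2+real p) + 1/(2+real q) \<le> 1/3 + 1/real k"
        using merge3[OF p1] kpq by simp
      have "(3/2 - 2*u) * (1/(2+real p) + 1/(2+real q)) \<le> (3/2 - 2*u) * (1/3 + 1/real k)"
        using m u0 by (intro mult_left_mono) auto
      then have "(1 + real p*u + tt*(1/2))/(1 + real p + tt) + (1 + real q*u + tt*(1/2))/(1 + real q + tt)
          \<le> 2*u + (3/2 - 2*u)*(1/3 + 1/real k)"
        using t1 gen[of p] gen[of q] by (simp add: algebra_simps)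
      also have "\<dots> \<le> 1 + 1/(real k+1) + (real k-1)*(a-u)/(real k+2)" using R1 k3 by simp
      finally show ?thesis using kpq by simp
    qed
  qed
qed

definition UU :: real where "UU = 363/1120"

lemma L0:
  fixes u k :: real assumes u: "0 \<le> u" "u \<le> UU" and k: "k \<ge> 7"
  shows "2*u + (1-u)*(1/2 + 1/k) \<le> 1 + 1/(k+1)"
proof -
  define c where "c = 1/2 + 1/k"
  have "1/k \<le> 1/2" using k by (simp add: divide_simps)
  then have c2: "c \<le> 2" by (simp add: c_def)
  have "2*u + (1-u)*c - (2*UU + (1-UU)*c) = (2 - c)*(u - UU)" by (simp add: algebra_simps)
  moreover have "(2 - c)*(u - UU) \<le> 0" using c2 u by (intro mult_nonneg_nonpos) auto
  ultimately have A: "2*u + (1-u)*c \<le> 2*UU + (1-UU)*c" by linarith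
  have B: "(1-UU)/k \<le> 1/(k+1)" using k by (simp add: UU_def field_simps)
  have "2*UU + (1-UU)*c = 2*UU + (1-UU)/2 + (1-UU)/k" by (simp add: c_def algebra_simps)
  also have "\<dots> \<le> 1 + 1/(k+1)" using B by (simp add: UU_def)
  finally show ?thesis using A by (simp add: c_def)
qed

lemma L1:
  fixes u k :: real assumes u: "0 \<le> u" "u \<le> UU" and k: "k \<ge> 7"
  shows "2*u + (3/2 - 2*u)*(1/3 + 1/k) \<le> 1 + 1/(k+1)"
proof -
  define c where "c = 1/3 + 1/k"
  have "1/k \<le> 1/2" using k by (simp add: divide_simps)
  then have c2: "c \<le> 1" by (simp add: c_def)
  have "2*u + (3/2 - 2*u)*c - (2*UU + (3/2 - 2*UU)*c) = (2 - 2*c)*(u - UU)" by (simp add: algebra_simps)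
  moreover have "(2 - 2*c)*(u - UU) \<le> 0" using c2 u by (intro mult_nonneg_nonpos) auto
  ultimately have A: "2*u + (3/2 - 2*u)*c \<le> 2*UU + (3/2 - 2*UU)*c" by linarith
  have B: "(3/2 - 2*UU)/k \<le> 1/(k+1)" using k by (simp add: UU_def field_simps)
  have "2*UU + (3/2 - 2*UU)*c = 2*UU + (3/2 - 2*UU)/3 + (3/2 - 2*UU)/k" by (simp add: c_def ring_distribs)
  also have "\<dots> \<le> 1 + 1/(k+1)" using B by (simp add: UU_def)
  finally show ?thesis using A by (simp add: c_def)
qed

lemma L2:
  fixes u k w :: real assumes u: "0 \<le> u" "u \<le> UU" and k: "k \<ge> 7"
    and w: "w \<le> (1 + (k-1)*u)/(k+1)"
  shows "(1 + w)/2 + (1 + (k-1)*u + w)/(k+1) \<le> 1 + 1/(k+1)"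
proof -
  define K where "K = k + 1"
  have K8: "K \<ge> 8" using k by (simp add: K_def)
  have w': "w \<le> (1 + (K-2)*UU)/K"
  proof -
    have "(k-1)*u \<le> (k-1)*UU" using u k by (intro mult_left_mono) auto
    then have "(1 + (k-1)*u)/(k+1) \<le> (1 + (k-1)*UU)/(k+1)" using k by (intro divide_right_mono) auto
    then show ?thesis using w by (simp add: K_def algebra_simps)
  qed
  have "(1 + w)/2 + (1 + (k-1)*u + w)/(k+1) \<le> (1 + w)/2 + (1 + (K-2)*UU + w)/K"
  proof -
    have "(k-1)*u \<le> (k-1)*UU" using u k by (intro mult_left_mono) auto
    then have "(1 + (k-1)*u + w)/(k+1) \<le> (1 + (k-1)*UU + w)/(k+1)" using k by (intro divide_right_mono) auto
    then show ?thesis by (simp add: K_def algebra_simps)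
  qed
  also have "\<dots> \<le> (1 + (1 + (K-2)*UU)/K)/2 + (1 + (K-2)*UU + (1 + (K-2)*UU)/K)/K"
  proof -
    have "(1 + w)/2 \<le> (1 + (1 + (K-2)*UU)/K)/2" using w' by (intro divide_right_mono) auto
    moreover have "(1 + (K-2)*UU + w)/K \<le> (1 + (K-2)*UU + (1 + (K-2)*UU)/K)/K"
      using w' K8 by (intro divide_right_mono) auto
    ultimately show ?thesis by linarith
  qed
  also have "\<dots> \<le> 1 + 1/K"
  proof -
    have h: "0 \<le> 31*K^2 + 332*K - 788" using K8 by (simp add: power2_eq_square) (smt (verit) K8 mult_nonneg_nonneg)
    have h2: "0 \<le> K^2 * (31*K^2 + 332*K - 788)" using h by simp
    show ?thesis using K8 h2 by (simp add: UU_def field_simps power2_eq_square)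
  qed
  finally show ?thesis by (simp add: K_def)
qed

definition RR0 :: "nat \<Rightarrow> real \<Rightarrow> real \<Rightarrow> bool" where
  "RR0 k u a \<longleftrightarrow> (k \<ge> 2 \<longrightarrow> 2*u + (1-u)*(1/2 + 1/real k) \<le> 1 + 1/(real k+1) + real k*(a-u)/(real k+2))"
definition RR1 :: "nat \<Rightarrow> real \<Rightarrow> real \<Rightarrow> bool" where
  "RR1 k u a \<longleftrightarrow> (k \<ge> 3 \<longrightarrow> 2*u + (3/2 - 2*u)*(1/3 + 1/real k) \<le> 1 + 1/(real k+1) + (real k-1)*(a-u)/(real k+2))"
definition RR2 :: "nat \<Rightarrow> real \<Rightarrow> real \<Rightarrow> bool" where
  "RR2 k u a \<longleftrightarrow> 3/4 + u + (3/2 - 2*u)/(real k+1) \<le> 1 + 1/(real k+1) + (real k-1)*(a-u)/(real k+2)"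

lemma small_R:
  assumes "1 \<le> k" "k \<le> 6"
  shows "RR0 k (Vq k 1 (k-1)) (Vq k 0 (k-1)) \<and> RR1 k (Vq k 1 (k-1)) (Vq k 0 (k-1)) \<and> RR2 k (Vq k 1 (k-1)) (Vq k 0 (k-1))"
proof -
  have "k = 1 \<or> k = 2 \<or> k = 3 \<or> k = 4 \<or> k = 5 \<or> k = 6" using assms by auto
  then show ?thesis
    by (elim disjE) (simp_all add: RR0_def RR1_def RR2_def eval_nat_numeral)
qed

lemma hh_dec: "k \<ge> 7 \<Longrightarrow> hh k / (real k + 1) \<le> UU"
proof (induction k rule: dec_induct)
  case base
  show ?case by (simp add: UU_def eval_nat_numeral)
next
  case (step m)
  have h1: "hh m \<ge> 1" using hh_ge1 step by simp
  have X: "hh (Suc m) * (real m + 1) \<le> hh m * (real (Suc m) + 1)"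
  proof -
    have "(real m + 1) * 1 \<le> (real m + 1) * hh m" using h1 by (intro mult_left_mono) auto
    then show ?thesis by (simp add: field_simps)
  qed
  have "(hh (Suc m) * (real m + 1) - hh m * (real (Suc m) + 1)) / ((real (Suc m) + 1) * (real m + 1)) \<le> 0"
    using X by (intro divide_nonpos_pos) auto
  then have "hh (Suc m) / (real (Suc m) + 1) \<le> hh m / (real m + 1)"
    by (subst frac_le_eq) auto
  then show ?case using step by linarith
qed

context lhs begin

lemma uu_hh: assumes k2: "k \<ge> 2" shows "uu \<le> hh k / (real k + 1)"
proof -
  obtain j where j: "k - 1 = Suc j" "j = k - 2" using k2 by (cases "k - 1") auto
  have kk: "k - Suc j = 1" using j k2 by simp
  have "uu = (1 + (real (k - Suc j) * real (Suc j)) * Vq k 1 j) / (real (k - Suc j) + real (1::nat) + real (k - Suc j) * real (Suc j))"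
    unfolding uu_def j(1) by (rule Vq_Suc)
  also have "\<dots> = (1 + real (k - 1) * Vq k 1 (k - 2)) / (real k + 1)"
    using kk j k2 by (simp add: of_nat_diff)
  also have "\<dots> \<le> (1 + real (k - 1) * Vq k 0 (k - 2)) / (real k + 1)"
    using Vq_mono_d[of "k - 2" k 0] k2 by (intro divide_right_mono add_left_mono mult_left_mono) auto
  also have "1 + real (k - 1) * Vq k 0 (k - 2) = hh k" using ka2 ka by simp
  finally show ?thesis .
qed

lemma uu_UU: "k \<ge> 7 \<Longrightarrow> uu \<le> UU"
  using uu_hh[of] hh_dec[of k] by fastforce

end

lemma m2_large:
  fixes u tt W :: real and k p q :: nat
  assumes u0: "0 \<le> u" "u \<le> UU" and k7: "k \<ge> 7"
    and t01: "tt = 0 \<or> tt = 1"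
    and kk: "real k = real p + real q + tt"
    and pq: "tt = 0 \<longrightarrow> p \<ge> 1 \<and> q \<ge> 1"
    and W: "W \<le> 1/2"
    and Wp: "tt = 1 \<and> p = 0 \<longrightarrow> W \<le> (1 + real q * u)/(2 + real q)"
    and Wq: "tt = 1 \<and> q = 0 \<longrightarrow> W \<le> (1 + real p * u)/(2 + real p)"
  shows "(1 + real p*u + tt*W)/(1 + real p + tt) + (1 + real q*u + tt*W)/(1 + real q + tt) \<le> 1 + 1/(real k+1)"
proof -
  have kr: "real k \<ge> 7" using k7 by simp
  have uh: "u \<le> 1/2" using u0 by (simp add: UU_def)
  show ?thesis
  proof (cases "tt = 0")
    case True
    then have p1: "p \<ge> 1" "q \<ge> 1" using pq by auto
    have kpq: "real k = real p + real q" using kk True by simp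
    have ep: "(1 + real p*u)/(1 + real p) = u + (1-u) * (1/(1+real p))" using p1 by (simp add: field_simps)
    have eq: "(1 + real q*u)/(1 + real q) = u + (1-u) * (1/(1+real q))" using p1 by (simp add: field_simps)
    have m: "1/(1+real p) + 1/(1+real q) \<le> 1/2 + 1/real k"
      using merge2[of "real p" "real q"] p1 kpq by simp
    have "(1-u) * (1/(1+real p) + 1/(1+real q)) \<le> (1-u) * (1/2 + 1/real k)"
      using m uh by (intro mult_left_mono) auto
    then have "(1 + real p*u)/(1 + real p) + (1 + real q*u)/(1 + real q) \<le> 2*u + (1-u)*(1/2 + 1/real k)"
      unfolding ep eq by (simp add: algebra_simps)
    also have "\<dots> \<le> 1 + 1/(real k+1)" using L0[OF u0 kr] .
    finally show ?thesis using True by simp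
  next
    case False
    then have t1: "tt = 1" using t01 by simp
    have kpq: "real k = real p + real q + 1" using kk t1 by simp
    show ?thesis
    proof (cases "p = 0")
      case True
      have qk: "real q = real k - 1" using kpq True by simp
      have w: "W \<le> (1 + (real k - 1)*u)/(real k + 1)" using Wp t1 True qk by (simp add: add.commute)
      have "(1 + real p*u + tt*W)/(1 + real p + tt) + (1 + real q*u + tt*W)/(1 + real q + tt)
          = (1 + W)/2 + (1 + (real k - 1)*u + W)/(real k + 1)"
        using True t1 qk by (simp add: add.commute add.left_commute)
      also have "\<dots> \<le> 1 + 1/(real k+1)" using L2[OF u0 kr w] .
      finally show ?thesis .
    next
      case pF: False
      show ?thesis
      proof (cases "q = 0")
        case True
        have pk: "real p = real k - 1" using kpq True by simp
        have w: "W \<le> (1 + (real k - 1)*u)/(real k + 1)" using Wq t1 True pk by (simp add: add.commute)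
        have "(1 + real p*u + tt*W)/(1 + real p + tt) + (1 + real q*u + tt*W)/(1 + real q + tt)
            = (1 + W)/2 + (1 + (real k - 1)*u + W)/(real k + 1)"
          using True t1 pk by (simp add: add.commute add.left_commute)
        also have "\<dots> \<le> 1 + 1/(real k+1)" using L2[OF u0 kr w] .
        finally show ?thesis .
      next
        case qF: False
        have p1: "real p \<ge> 1" "real q \<ge> 1" using pF qF by auto
        have gen: "(1 + real r*u + 1/2)/(2 + real r) = u + (3/2 - 2*u) * (1/(2+real r))" for r :: nat
          by (simp add: field_simps)
        have A: "(1 + real r*u + W)/(2 + real r) \<le> (1 + real r*u + 1/2)/(2 + real r)" for r :: nat
          using W by (intro divide_right_mono) auto
        have m: "1/(2+real p) + 1/(2+real q) \<le> 1/3 + 1/real k"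
          using merge3[OF p1] kpq by simp
        have "(3/2 - 2*u) * (1/(2+real p) + 1/(2+real q)) \<le> (3/2 - 2*u) * (1/3 + 1/real k)"
          using m uh by (intro mult_left_mono) auto
        then have B: "(1 + real p*u + 1/2)/(2 + real p) + (1 + real q*u + 1/2)/(2 + real q)
            \<le> 2*u + (3/2 - 2*u)*(1/3 + 1/real k)"
          using gen[of p] gen[of q] by (simp add: algebra_simps)
        have "(1 + real p*u + tt*W)/(1 + real p + tt) + (1 + real q*u + tt*W)/(1 + real q + tt)
            = (1 + real p*u + W)/(2 + real p) + (1 + real q*u + W)/(2 + real q)"
          using t1 by (simp add: add.commute add.left_commute)
        also have "\<dots> \<le> 2*u + (3/2 - 2*u)*(1/3 + 1/real k)" using A[of p] A[of q] B by linarith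
        also have "\<dots> \<le> 1 + 1/(real k+1)" using L1[OF u0 kr] .
        finally show ?thesis .
      qed
    qed
  qed
qed

context m2 begin

lemma pair_refined2:
  assumes t: "adj x z" and B0: "BB = {}"
  shows "DD {x, z} \<le> (1 + real (card AA) * uu) / (2 + real (card AA))"
proof -
  interpret sw: m2 n k lam ls E z x
    using lhs_axioms Oxz xz by (simp add: m2_def m2_axioms_def insert_commute)
  have "DD {z, x} \<le> (1 + real (card sw.BB) * uu) / (2 + real (card sw.BB))"
    using sw.pair_refined adj_sym[OF t] B0 unfolding sw.AA_def BB_def by blast
  moreover have "sw.BB = AA" unfolding sw.BB_def AA_def ..
  ultimately show ?thesis by (simp add: insert_commute)
qed

lemma m2_total: "(\<Sum>i\<in>NN. DD {i}) \<le> hh (k + 1) + real (n - (k + 1))"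
proof -
  define p where "p = card AA"
  define q where "q = card BB"
  define W where "W = DD {x, z}"
  have kk: "real k = real p + real q + tt" using card_rel by (simp add: p_def q_def)
  have t01: "tt = 0 \<or> tt = 1" by (rule tt01)
  have pq: "tt = 0 \<longrightarrow> p \<ge> 1 \<and> q \<ge> 1"
  proof
    assume t0: "tt = 0"
    then have na: "\<not> adj x z" by (simp add: tt_def split: if_splits)
    have x: "x \<in> Oset" "z \<in> Oset" using Oxz by auto
    have "card (Nb x) \<ge> 1" "card (Nb z) \<ge> 1" using Nb_nonempty x by auto
    then show "p \<ge> 1 \<and> q \<ge> 1" using Nbx Nbz na by (simp add: p_def q_def)
  qed
  have Wh: "W \<le> 1/2" using pair_half by (simp add: W_def)
  have bx: "DD {x} \<le> (1 + real p * uu + tt * W) / (1 + real p + tt)" using bound_x by (simp add: p_def W_def)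
  have bz: "DD {z} \<le> (1 + real q * uu + tt * W) / (1 + real q + tt)" using bound_z by (simp add: q_def W_def)
  have sO: "(\<Sum>i\<in>Oset. DD {i}) = DD {x} + DD {z}" using Oxz xz by simp
  have cO: "card Oset = 2" using Oxz xz by simp
  have D: "(\<Sum>i\<in>NN. DD {i}) \<le> (\<Sum>i\<in>CC. DD {i}) + (DD {x} + DD {z}) + (real n - real k - 2)"
    using decomp sO cO by simp
  have n: "real (n - (k + 1)) = real n - real k - 1" using kn by (simp add: of_nat_diff)
  have key: "(\<Sum>i\<in>CC. DD {i}) + (DD {x} + DD {z}) \<le> real k * aa + 1 + 1/(real k + 1)"
  proof (cases "k \<le> 6")
    case True
    have R: "RR0 k uu aa" "RR1 k uu aa" "RR2 k uu aa"
      using small_R[OF k1 True] by (auto simp: uu_def aa_def)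
    have tt0: "tt \<ge> 0" using t01 by auto
    have bx': "DD {x} \<le> (1 + real p * uu + tt * (1/2)) / (1 + real p + tt)"
      using bx Wh tt0 by (smt (verit) divide_right_mono mult_left_mono of_nat_0_le_iff)
    have bz': "DD {z} \<le> (1 + real q * uu + tt * (1/2)) / (1 + real q + tt)"
      using bz Wh tt0 by (smt (verit) divide_right_mono mult_left_mono of_nat_0_le_iff)
    have S: "(1 + real p*uu + tt*(1/2))/(1 + real p + tt) + (1 + real q*uu + tt*(1/2))/(1 + real q + tt)
         \<le> 1 + 1/(real k+1) + (real p + real q)*(aa-uu)/(real k+2)"
      by (rule m2_small[OF uu_nonneg uu_le_aa uu_half k1 t01 kk pq])
         (use R in \<open>auto simp: RR0_def RR1_def RR2_def\<close>)
    have C: "(\<Sum>i\<in>CC. DD {i}) \<le> real k * aa - (real p + real q) * (aa - uu) / (real k + 2)"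
      using sum_C by (simp add: p_def q_def)
    show ?thesis using C S bx' bz' by linarith
  next
    case False
    then have k7: "k \<ge> 7" by simp
    have Wp: "tt = 1 \<and> p = 0 \<longrightarrow> W \<le> (1 + real q * uu)/(2 + real q)"
    proof
      assume a: "tt = 1 \<and> p = 0"
      then have "adj x z" by (simp add: tt_def split: if_splits)
      moreover have "AA = {}" using a finAB by (simp add: p_def)
      ultimately show "W \<le> (1 + real q * uu)/(2 + real q)" using pair_refined by (simp add: W_def q_def)
    qed
    have Wq: "tt = 1 \<and> q = 0 \<longrightarrow> W \<le> (1 + real p * uu)/(2 + real p)"
    proof
      assume a: "tt = 1 \<and> q = 0"
      then have "adj x z" by (simp add: tt_def split: if_splits)
      moreover have "BB = {}" using a finAB by (simp add: q_def)
      ultimately show "W \<le> (1 + real p * uu)/(2 + real p)" using pair_refined2 by (simp add: W_def p_def)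
    qed
    have S: "(1 + real p*uu + tt*W)/(1 + real p + tt) + (1 + real q*uu + tt*W)/(1 + real q + tt) \<le> 1 + 1/(real k+1)"
      by (rule m2_large[OF uu_nonneg uu_UU[OF k7] k7 t01 kk pq Wh Wp Wq])
    show ?thesis using sum_C0 S bx bz by linarith
  qed
  show ?thesis using D key n hh_succ by linarith
qed

end

context lhs begin

lemma lhs_total: "(\<Sum>i\<in>NN. DD {i}) \<le> hh (k + 1) + real (n - (k + 1))"
proof -
  have c0: "card Oset \<noteq> 0" using O_nonempty finO by simp
  consider "card Oset = 1" | "card Oset = 2" | "card Oset = 3" | "card Oset \<ge> 4" using c0 by linarith
  then show ?thesis
  proof cases
    case 1 then show ?thesis by (rule case_m1)
  next
    case 2
    then obtain x z where xz: "Oset = {x, z}" "x \<noteq> z" by (meson card_2_iff)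
    interpret m2 n k lam ls E x z
      using lhs_axioms xz by (simp add: m2_def m2_axioms_def)
    show ?thesis by (rule m2_total)
  next
    case 3 then show ?thesis using target_from_O sumO_3 by blast
  next
    case 4 then show ?thesis using target_from_O sumO_ge4 by blast
  qed
qed

end

theorem lemma4:
  fixes n k :: nat and lam ls :: real and E :: "nat set set"
  assumes "1 \<le> k" and "k \<le> n - 1"
    and "lam > 0" and "ls > 0"
    and "card E = k"
    and "\<forall>e\<in>E. \<exists>a b. a \<in> {1..n} \<and> b \<in> {1..n} \<and> a \<noteq> b \<and> e = {a, b}"
    and "E \<inter> mini_full k = {}"
  shows "(\<Sum>i=1..n. Delta_i n lam ls (mini_full k \<union> E) i)
         \<le> (\<Sum>i=1..n. Delta_i n lam ls (mini_full k \<union> star_edges k) i)"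
proof -
  have kn: "k + 1 \<le> n" using assms(1,2) by linarith
  interpret lhs n k lam ls E using assms kn by unfold_locales auto
  have n: "n > 0" using kn by simp
  define c where "c = ls / (lam / real n)"
  have c0: "c \<ge> 0" using assms(3,4) by (simp add: c_def)
  have "(\<Sum>i=1..n. Delta_i n lam ls (mini_full k \<union> E) i) = c * (\<Sum>i\<in>{1..n}. ND n lam ls (mini_full k \<union> E) {i})"
    using Delta_i_ND[OF n assms(3,4)] by (simp add: c_def sum_distrib_left)
  also have "\<dots> \<le> c * (hh (k + 1) + real (n - (k + 1)))"
    using lhs_total c0 by (intro mult_left_mono) auto
  also have "hh (k + 1) + real (n - (k + 1)) = (\<Sum>i\<in>{1..n}. ND n lam ls (mini_full k \<union> star_edges k) {i})"
    using rhs_value[OF assms(1) kn assms(3,4)] by simp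
  also have "c * \<dots> = (\<Sum>i=1..n. Delta_i n lam ls (mini_full k \<union> star_edges k) i)"
    using Delta_i_ND[OF n assms(3,4)] by (simp add: c_def sum_distrib_left)
  finally show ?thesis .
qed


end
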